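(* Let $(A,\Delta,\Delta')$ be a commutative Hopf brace over a field $k$, with antipodes $S$ (for $\Delta$) and $T$ (for $\Delta'$), and let $A_{\Delta'}$ denote the Hopf algebra $(A,m,1,\Delta',\epsilon,T)$. Then $(A_{\Delta'},A_{\Delta'})$ is a Hopf matched pair with coactions $$\rho(a)=a_{(-1)}\otimes a_{(0)}=S(a_1)a_{21'}\otimes a_{22'},$$ $$\varphi(a)=a_{[0]}\otimes a_{[1]}=T(a_{1'})_{(-1)}a_{2'}\otimes T(a_{1'})_{(0)}a_{3'}=S(T(a_{1'})_1)T(a_{1'})_{21'}a_{2'}\otimes T(a_{1'})_{22'}a_{3'},$$ for all $a\in A$.
   Context: All objects are over a field $k$. A Hopf brace $(A,\Delta,\Delta')$ consists of an algebra $(A,m,1)$ with two Hopf algebra structures $(A,m,1,\Delta,\varepsilon,S)$ and $(A,m,1,\Delta',\epsilon,T)$ such that for all $h$: $h_{1'}\otimes h_{2'1}\otimes h_{2'2}=h_{11'}S(h_2)h_{31'}\otimes h_{12'}\otimes h_{32'}$; it is commutative if $A$ is commutative. Sweedler notation: $\Delta(h)=h_1\otimes h_2$, $\Delta'(h)=h_{1'}\otimes h_{2'}$ (iterated $h_{1'}\otimes h_{2'}\otimes h_{3'}$), $h_{21'}$ means $\Delta'$ applied to $h_2$. Hopf matched pair: for Hopf algebras $A$ and $H$, a pair $(A,H)$ with linear maps $\rho:A\to H\otimes A$, $\rho(a)=a_{(-1)}\otimes a_{(0)}$, and $\varphi:H\to H\otimes A$, $\varphi(h)=h_{[0]}\otimes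 h_{[1]}$, such that $(A,\rho)$ is a left $H$-comodule algebra, $(H,\varphi)$ is a right $A$-comodule algebra (coactions are algebra maps), and for all $a\in A,h\in H$ (with comultiplications of $A$ and $H$ both written $x_1\otimes x_2$): (HM1) $a_{(-1)}\varepsilon_A(a_{(0)})=\varepsilon_A(a)1_H$, $\varepsilon_H(h_{[0]})h_{[1]}=\varepsilon_H(h)1_A$; (HM2) $a_{(-1)}\otimes a_{(0)1}\otimes a_{(0)2}=a_{1(-1)}a_{2(-1)[0]}\otimes a_{1(0)}a_{2(-1)[1]}\otimes a_{2(0)}$; (HM3) $h_{[0]1}\otimes h_{[0]2}\otimes h_{[1]}=h_{1[0]}\otimes h_{1[1](-1)}h_{2[0]}\otimes h_{1[1](0)}h_{2[1]}$; (HM4) $h_{[0]}a_{(-1)}\otimes h_{[1]}a_{(0)}=a_{(-1)}h_{[0]}\otimes a_{(0)}h_{[1]}$. In the claim both $A$ and $H$ are $A_{\Delta'}$, so their comultiplication is $\Delta'$. *)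

theory Defs
  imports Main "HOL.Vector_Spaces"
begin

text \<open>The ground field is a type 'k of class field; the algebra A is a type 'a
  (a commutative ring with unit, i.e. the multiplication m and unit 1 of A) together with a
  scalar multiplication sc making it a k-algebra. An element of A tensor A (resp. A tensor A
  tensor A) is represented by a finite formal sum, i.e. a list of pairs (resp. triples);
  two such representatives denote the same tensor iff they agree under all products of
  linear functionals A -> k (over a field this characterises equality in the tensor
  product). A comultiplication is a map A -> (A x A) list that is linear up to this
  equality; Sweedler sums are list comprehensions over these representatives.\<close>

definition teq2 :: "('k::field \<Rightarrow> 'a::ring_1 \<Rightarrow> 'a) \<Rightarrow> ('a \<times> 'a) list \<Rightarrow> ('a \<times> 'a) list \<Rightarrow> bool" where
  "teq2 sc xs ys \<longleftrightarrow>
     (\<forall>f g. Vector_Spaces.linear sc (*) f \<longrightarrow> Vector_Spaces.linear sc (*) g \<longrightarrow>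
        sum_list (map (\<lambda>(a,b). f a * g b) xs) = sum_list (map (\<lambda>(a,b). f a * g b) ys))"

definition teq3 :: "('k::field \<Rightarrow> 'a::ring_1 \<Rightarrow> 'a) \<Rightarrow> ('a \<times> 'a \<times> 'a) list \<Rightarrow> ('a \<times> 'a \<times> 'a) list \<Rightarrow> bool" where
  "teq3 sc xs ys \<longleftrightarrow>
     (\<forall>f g h. Vector_Spaces.linear sc (*) f \<longrightarrow> Vector_Spaces.linear sc (*) g \<longrightarrow>
        Vector_Spaces.linear sc (*) h \<longrightarrow>
        sum_list (map (\<lambda>(a,b,c). f a * g b * h c) xs) = sum_list (map (\<lambda>(a,b,c). f a * g b * h c) ys))"

definition k_algebra :: "('k::field \<Rightarrow> 'a::ring_1 \<Rightarrow> 'a) \<Rightarrow> bool" where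
  "k_algebra sc \<longleftrightarrow> vector_space sc \<and>
     (\<forall>c x y. sc c (x * y) = sc c x * y \<and> sc c (x * y) = x * sc c y)"

definition lin2 :: "('k::field \<Rightarrow> 'a::ring_1 \<Rightarrow> 'a) \<Rightarrow> ('a \<Rightarrow> ('a \<times> 'a) list) \<Rightarrow> bool" where
  "lin2 sc D \<longleftrightarrow>
     (\<forall>x y. teq2 sc (D (x + y)) (D x @ D y)) \<and>
     (\<forall>c x. teq2 sc (D (sc c x)) (map (\<lambda>(a,b). (sc c a, b)) (D x)))"

definition comult3 :: "('a \<Rightarrow> ('a \<times> 'a) list) \<Rightarrow> 'a \<Rightarrow> ('a \<times> 'a \<times> 'a) list" where
  "comult3 D h = [(a, c, d). (a, b) \<leftarrow> D h, (c, d) \<leftarrow> D b]"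

definition hopf_algebra :: "('k::field \<Rightarrow> 'a::ring_1 \<Rightarrow> 'a) \<Rightarrow> ('a \<Rightarrow> ('a \<times> 'a) list) \<Rightarrow>
    ('a \<Rightarrow> 'k) \<Rightarrow> ('a \<Rightarrow> 'a) \<Rightarrow> bool" where
  "hopf_algebra sc D e S \<longleftrightarrow>
     k_algebra sc \<and>
     lin2 sc D \<and> Vector_Spaces.linear sc (*) e \<and> Vector_Spaces.linear sc sc S \<and>
     (\<forall>x. teq3 sc [(c, d, b). (a, b) \<leftarrow> D x, (c, d) \<leftarrow> D a]
                  [(a, c, d). (a, b) \<leftarrow> D x, (c, d) \<leftarrow> D b]) \<and>
     (\<forall>x. sum_list (map (\<lambda>(a,b). sc (e a) b) (D x)) = x \<and>
          sum_list (map (\<lambda>(a,b). sc (e b) a) (D x)) = x) \<and>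
     (\<forall>x y. teq2 sc (D (x * y)) [(a * c, b * d). (a, b) \<leftarrow> D x, (c, d) \<leftarrow> D y]) \<and>
     teq2 sc (D 1) [(1, 1)] \<and>
     (\<forall>x y. e (x * y) = e x * e y) \<and> e 1 = 1 \<and>
     (\<forall>x. sum_list (map (\<lambda>(a,b). S a * b) (D x)) = sc (e x) 1 \<and>
          sum_list (map (\<lambda>(a,b). a * S b) (D x)) = sc (e x) 1)"

text \<open>Hopf brace (A, D, D'): two Hopf algebra structures on the same algebra with
  h_1' (x) h_2'1 (x) h_2'2 = h_11' S(h_2) h_31' (x) h_12' (x) h_32'.\<close>
definition hopf_brace :: "('k::field \<Rightarrow> 'a::ring_1 \<Rightarrow> 'a) \<Rightarrow>
    ('a \<Rightarrow> ('a \<times> 'a) list) \<Rightarrow> ('a \<Rightarrow> 'k) \<Rightarrow> ('a \<Rightarrow> 'a) \<Rightarrow>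
    ('a \<Rightarrow> ('a \<times> 'a) list) \<Rightarrow> ('a \<Rightarrow> 'k) \<Rightarrow> ('a \<Rightarrow> 'a) \<Rightarrow> bool" where
  "hopf_brace sc D e S D' e' T \<longleftrightarrow>
     hopf_algebra sc D e S \<and> hopf_algebra sc D' e' T \<and>
     (\<forall>h. teq3 sc [(a, c, d). (a, b) \<leftarrow> D' h, (c, d) \<leftarrow> D b]
                  [(p * S y * r, q, s). (x, y, z) \<leftarrow> comult3 D h, (p, q) \<leftarrow> D' x, (r, s) \<leftarrow> D' z])"

text \<open>(A,rho) is a left H-comodule algebra, rho : A -> H (x) A (here H and A share the
  underlying algebra and field).\<close>
definition left_comodule_algebra :: "('k::field \<Rightarrow> 'a::ring_1 \<Rightarrow> 'a) \<Rightarrow>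
    ('a \<Rightarrow> ('a \<times> 'a) list) \<Rightarrow> ('a \<Rightarrow> 'k) \<Rightarrow> ('a \<Rightarrow> ('a \<times> 'a) list) \<Rightarrow> bool" where
  "left_comodule_algebra sc DH eH rho \<longleftrightarrow>
     lin2 sc rho \<and>
     (\<forall>a. teq3 sc [(c, d, q). (p, q) \<leftarrow> rho a, (c, d) \<leftarrow> DH p]
                  [(p, c, d). (p, q) \<leftarrow> rho a, (c, d) \<leftarrow> rho q]) \<and>
     (\<forall>a. sum_list (map (\<lambda>(p,q). sc (eH p) q) (rho a)) = a) \<and>
     (\<forall>a b. teq2 sc (rho (a * b)) [(p * r, q * s). (p, q) \<leftarrow> rho a, (r, s) \<leftarrow> rho b]) \<and>
     teq2 sc (rho 1) [(1, 1)]"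

definition right_comodule_algebra :: "('k::field \<Rightarrow> 'a::ring_1 \<Rightarrow> 'a) \<Rightarrow>
    ('a \<Rightarrow> ('a \<times> 'a) list) \<Rightarrow> ('a \<Rightarrow> 'k) \<Rightarrow> ('a \<Rightarrow> ('a \<times> 'a) list) \<Rightarrow> bool" where
  "right_comodule_algebra sc DA eA phi \<longleftrightarrow>
     lin2 sc phi \<and>
     (\<forall>h. teq3 sc [(c, d, v). (u, v) \<leftarrow> phi h, (c, d) \<leftarrow> phi u]
                  [(u, c, d). (u, v) \<leftarrow> phi h, (c, d) \<leftarrow> DA v]) \<and>
     (\<forall>h. sum_list (map (\<lambda>(u,v). sc (eA v) u) (phi h)) = h) \<and>
     (\<forall>h g. teq2 sc (phi (h * g)) [(u * r, v * s). (u, v) \<leftarrow> phi h, (r, s) \<leftarrow> phi g]) \<and>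
     teq2 sc (phi 1) [(1, 1)]"

definition hopf_matched_pair :: "('k::field \<Rightarrow> 'a::ring_1 \<Rightarrow> 'a) \<Rightarrow>
    ('a \<Rightarrow> ('a \<times> 'a) list) \<Rightarrow> ('a \<Rightarrow> 'k) \<Rightarrow> ('a \<Rightarrow> 'a) \<Rightarrow>
    ('a \<Rightarrow> ('a \<times> 'a) list) \<Rightarrow> ('a \<Rightarrow> 'k) \<Rightarrow> ('a \<Rightarrow> 'a) \<Rightarrow>
    ('a \<Rightarrow> ('a \<times> 'a) list) \<Rightarrow> ('a \<Rightarrow> ('a \<times> 'a) list) \<Rightarrow> bool" where
  "hopf_matched_pair sc DA eA SA DH eH SH rho phi \<longleftrightarrow>
     hopf_algebra sc DA eA SA \<and> hopf_algebra sc DH eH SH \<and>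
     left_comodule_algebra sc DH eH rho \<and> right_comodule_algebra sc DA eA phi \<and>
     \<comment> \<open>HM1\<close>
     (\<forall>a. sum_list (map (\<lambda>(p,q). sc (eA q) p) (rho a)) = sc (eA a) 1) \<and>
     (\<forall>h. sum_list (map (\<lambda>(u,v). sc (eH u) v) (phi h)) = sc (eH h) 1) \<and>
     \<comment> \<open>HM2\<close>
     (\<forall>a. teq3 sc [(p, c, d). (p, q) \<leftarrow> rho a, (c, d) \<leftarrow> DA q]
                  [(p * r, q * s, y0). (a1, a2) \<leftarrow> DA a, (p, q) \<leftarrow> rho a1,
                                        (y1, y0) \<leftarrow> rho a2, (r, s) \<leftarrow> phi y1]) \<and>
     \<comment> \<open>HM3\<close>
     (\<forall>h. teq3 sc [(c, d, v). (u, v) \<leftarrow> phi h, (c, d) \<leftarrow> DH u]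
                  [(u, p * r, q * s). (h1, h2) \<leftarrow> DH h, (u, v) \<leftarrow> phi h1,
                                       (p, q) \<leftarrow> rho v, (r, s) \<leftarrow> phi h2]) \<and>
     \<comment> \<open>HM4\<close>
     (\<forall>a h. teq2 sc [(u * p, v * q). (u, v) \<leftarrow> phi h, (p, q) \<leftarrow> rho a]
                    [(p * u, q * v). (u, v) \<leftarrow> phi h, (p, q) \<leftarrow> rho a])"

definition brace_rho :: "('a::ring_1 \<Rightarrow> ('a \<times> 'a) list) \<Rightarrow> ('a \<Rightarrow> 'a) \<Rightarrow>
    ('a \<Rightarrow> ('a \<times> 'a) list) \<Rightarrow> 'a \<Rightarrow> ('a \<times> 'a) list" where
  "brace_rho D S D' a = [(S x * p, q). (x, y) \<leftarrow> D a, (p, q) \<leftarrow> D' y]"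

definition brace_phi :: "('a::ring_1 \<Rightarrow> ('a \<times> 'a) list) \<Rightarrow> ('a \<Rightarrow> 'a) \<Rightarrow>
    ('a \<Rightarrow> ('a \<times> 'a) list) \<Rightarrow> ('a \<Rightarrow> 'a) \<Rightarrow> 'a \<Rightarrow> ('a \<times> 'a) list" where
  "brace_phi D S D' T a =
     [(u * y, v * z). (x, y, z) \<leftarrow> comult3 D' a, (u, v) \<leftarrow> brace_rho D S D' (T x)]"

end

theory Submission
  imports Defs
begin


locale kalg =
  fixes sc :: "'k::field \<Rightarrow> 'a::comm_ring_1 \<Rightarrow> 'a"
  assumes kalg: "k_algebra sc"
begin

definition Lin :: "('a \<Rightarrow> 'k) \<Rightarrow> bool" where
  "Lin F \<longleftrightarrow> (\<forall>x y. F (x + y) = F x + F y) \<and> (\<forall>c x. F (sc c x) = c * F x)"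

definition LinA :: "('a \<Rightarrow> 'a) \<Rightarrow> bool" where
  "LinA F \<longleftrightarrow> (\<forall>x y. F (x + y) = F x + F y) \<and> (\<forall>c x. F (sc c x) = sc c (F x))"

definition sw :: "('a \<times> 'a) list \<Rightarrow> ('a \<Rightarrow> 'a \<Rightarrow> 'k) \<Rightarrow> 'k" where
  "sw xs F = sum_list (map (\<lambda>(a,b). F a b) xs)"

lemma vs: "vector_space sc" using kalg by (simp add: k_algebra_def)

sublocale V: vector_space sc by (rule vs)

lemma sc_mult_left: "sc c x * y = sc c (x * y)" using kalg by (simp add: k_algebra_def)
lemma sc_mult_right: "x * sc c y = sc c (x * y)" using kalg by (metis k_algebra_def)

lemma Lin_linear: "Vector_Spaces.linear sc (*) f \<Longrightarrow> Lin f"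
  unfolding Lin_def by (simp add: Vector_Spaces.linear_def module_hom_def module_hom_axioms_def)

lemma linear_Lin: "Lin f \<Longrightarrow> Vector_Spaces.linear sc (*) f"
  unfolding Lin_def Vector_Spaces.linear_def module_hom_def module_hom_axioms_def
  using vs by (auto simp: module_iff_vector_space[symmetric] vector_space_def module_def field_simps)

lemma Lin_0: "Lin F \<Longrightarrow> F 0 = 0"
  unfolding Lin_def by (metis add_cancel_right_right add_0)

lemma Lin_sum_list: "Lin F \<Longrightarrow> F (sum_list (map G xs)) = sum_list (map (\<lambda>x. F (G x)) xs)"
  by (induction xs) (auto simp: Lin_0 Lin_def)

lemma Lin_sum: "Lin F \<Longrightarrow> F (sum G X) = (\<Sum>x\<in>X. F (G x))"
  apply (induction X rule: infinite_finite_induct)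
  by (auto simp: Lin_0 Lin_def)

definition bas where "bas = V.extend_basis {}"
definition rep where "rep v b = V.representation bas v b"

lemma bas: "V.independent bas" "V.span bas = UNIV"
  using V.independent_extend_basis[of "{}"] V.span_extend_basis[of "{}"]
  by (auto simp: bas_def V.independent_empty)

lemma Lin_rep: "Lin (\<lambda>v. rep v b)"
  unfolding rep_def using V.linear_representation[OF bas] by (intro Lin_linear) auto

definition supp where "supp v = {b. rep v b \<noteq> 0}"

lemma finite_supp: "finite (supp v)"
  unfolding supp_def rep_def by (rule V.finite_representation)

lemma expand: "finite F \<Longrightarrow> supp v \<subseteq> F \<Longrightarrow> (\<Sum>b\<in>F. sc (rep v b) b) = v"
proof -
  assume F: "finite F" "supp v \<subseteq> F"
  have "(\<Sum>b\<in>F. sc (rep v b) b) = (\<Sum>b\<in>supp v. sc (rep v b) b)"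
    apply (rule sum.mono_neutral_cong_right[OF F(1) F(2)])
    by (auto simp: supp_def)
  also have "\<dots> = v"
    unfolding supp_def rep_def
    using V.sum_nonzero_representation_eq[OF bas(1)] bas(2) by auto
  finally show ?thesis .
qed

lemma Lin_expand: "Lin G \<Longrightarrow> finite F \<Longrightarrow> supp v \<subseteq> F \<Longrightarrow> G v = (\<Sum>b\<in>F. rep v b * G b)"
proof -
  assume G: "Lin G" and F: "finite F" "supp v \<subseteq> F"
  have "G v = G (\<Sum>b\<in>F. sc (rep v b) b)" using expand[OF F] by simp
  also have "\<dots> = (\<Sum>b\<in>F. rep v b * G b)" using G by (simp add: Lin_sum) (simp add: Lin_def)
  finally show ?thesis .
qed

lemma separate: "(\<And>f. Lin f \<Longrightarrow> f x = f y) \<Longrightarrow> x = y"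
proof -
  assume H: "\<And>f. Lin f \<Longrightarrow> f x = f y"
  define F where "F = supp x \<union> supp y"
  have F: "finite F" "supp x \<subseteq> F" "supp y \<subseteq> F" by (auto simp: F_def finite_supp)
  have "x = (\<Sum>b\<in>F. sc (rep x b) b)" using expand[OF F(1,2)] by simp
  also have "\<dots> = (\<Sum>b\<in>F. sc (rep y b) b)" using H[OF Lin_rep] by simp
  also have "\<dots> = y" using expand[OF F(1,3)] by simp
  finally show ?thesis .
qed


definition Bil :: "('a \<Rightarrow> 'a \<Rightarrow> 'k) \<Rightarrow> bool" where
  "Bil F \<longleftrightarrow> (\<forall>b. Lin (\<lambda>a. F a b)) \<and> (\<forall>a. Lin (\<lambda>b. F a b))"

definition Tri :: "('a \<Rightarrow> 'a \<Rightarrow> 'a \<Rightarrow> 'k) \<Rightarrow> bool" where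
  "Tri F \<longleftrightarrow> (\<forall>b c. Lin (\<lambda>a. F a b c)) \<and> (\<forall>a c. Lin (\<lambda>b. F a b c)) \<and> (\<forall>a b. Lin (\<lambda>c. F a b c))"

definition sw3 :: "('a \<times> 'a \<times> 'a) list \<Rightarrow> ('a \<Rightarrow> 'a \<Rightarrow> 'a \<Rightarrow> 'k) \<Rightarrow> 'k" where
  "sw3 xs F = sum_list (map (\<lambda>(a,b,c). F a b c) xs)"

lemma sum_list_sum_swap:
  "sum_list (map (\<lambda>x. \<Sum>u\<in>F. G x u) xs) = (\<Sum>u\<in>F. sum_list (map (\<lambda>x. G x u) xs))"
  by (induction xs) (auto simp: sum.distrib)


lemma sw_expand:
  assumes F: "finite F" and sub: "\<And>a b. (a,b) \<in> set xs \<Longrightarrow> supp a \<subseteq> F \<and> supp b \<subseteq> F"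
    and B: "Bil \<Phi>"
  shows "sw xs \<Phi> = (\<Sum>u\<in>F. \<Sum>v\<in>F. \<Phi> u v * sw xs (\<lambda>a b. rep a u * rep b v))"
proof -
  have ex: "\<Phi> a b = (\<Sum>u\<in>F. \<Sum>v\<in>F. \<Phi> u v * (rep a u * rep b v))" if "(a,b) \<in> set xs" for a b
  proof -
    have "\<Phi> a b = (\<Sum>u\<in>F. rep a u * \<Phi> u b)"
      using Lin_expand[of "\<lambda>a. \<Phi> a b" F a] B sub[OF that] F by (auto simp: Bil_def)
    also have "\<dots> = (\<Sum>u\<in>F. rep a u * (\<Sum>v\<in>F. rep b v * \<Phi> u v))"
      using Lin_expand[of "\<lambda>b. \<Phi> u b" F b for u] B sub[OF that] F by (auto simp: Bil_def)
    finally show ?thesis by (simp add: sum_distrib_left algebra_simps)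
  qed
  have "sw xs \<Phi> = sum_list (map (\<lambda>(a,b). \<Sum>u\<in>F. \<Sum>v\<in>F. \<Phi> u v * (rep a u * rep b v)) xs)"
    unfolding sw_def by (rule arg_cong[where f=sum_list], rule map_cong) (auto simp: ex)
  also have "\<dots> = (\<Sum>u\<in>F. \<Sum>v\<in>F. \<Phi> u v * sw xs (\<lambda>a b. rep a u * rep b v))"
    unfolding sw_def
    by (induction xs) (auto simp: sum.distrib algebra_simps)
  finally show ?thesis .
qed

lemma teq2_Bil: assumes "teq2 sc xs ys" "Bil \<Phi>" shows "sw xs \<Phi> = sw ys \<Phi>"
proof -
  define F where "F = (\<Union>p\<in>set xs \<union> set ys. supp (fst p) \<union> supp (snd p))"
  have F: "finite F" unfolding F_def by (auto simp: finite_supp)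
  have s1: "supp a \<subseteq> F \<and> supp b \<subseteq> F" if "(a,b) \<in> set xs" for a b
    using that unfolding F_def by force
  have s2: "supp a \<subseteq> F \<and> supp b \<subseteq> F" if "(a,b) \<in> set ys" for a b
    using that unfolding F_def by force
  have eq: "sw xs (\<lambda>a b. rep a u * rep b v) = sw ys (\<lambda>a b. rep a u * rep b v)" for u v
    using assms(1) linear_Lin[OF Lin_rep] unfolding teq2_def sw_def by blast
  show ?thesis using sw_expand[OF F s1 assms(2)] sw_expand[OF F s2 assms(2)] eq by simp
qed

lemma sw3_expand:
  assumes F: "finite F" and sub: "\<And>a b c. (a,b,c) \<in> set xs \<Longrightarrow> supp a \<subseteq> F \<and> supp b \<subseteq> F \<and> supp c \<subseteq> F"
    and B: "Tri \<Phi>"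
  shows "sw3 xs \<Phi> = (\<Sum>u\<in>F. \<Sum>v\<in>F. \<Sum>w\<in>F. \<Phi> u v w * sw3 xs (\<lambda>a b c. rep a u * rep b v * rep c w))"
proof -
  have ex: "\<Phi> a b c = (\<Sum>u\<in>F. \<Sum>v\<in>F. \<Sum>w\<in>F. \<Phi> u v w * (rep a u * rep b v * rep c w))"
    if "(a,b,c) \<in> set xs" for a b c
  proof -
    have "\<Phi> a b c = (\<Sum>u\<in>F. rep a u * \<Phi> u b c)"
      using Lin_expand[of "\<lambda>a. \<Phi> a b c" F a] B sub[OF that] F by (auto simp: Tri_def)
    also have "\<dots> = (\<Sum>u\<in>F. rep a u * (\<Sum>v\<in>F. rep b v * \<Phi> u v c))"
      using Lin_expand[of "\<lambda>b. \<Phi> u b c" F b for u] B sub[OF that] F by (auto simp: Tri_def)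
    also have "\<dots> = (\<Sum>u\<in>F. rep a u * (\<Sum>v\<in>F. rep b v * (\<Sum>w\<in>F. rep c w * \<Phi> u v w)))"
      using Lin_expand[of "\<lambda>c. \<Phi> u v c" F c for u v] B sub[OF that] F by (auto simp: Tri_def)
    finally show ?thesis by (simp add: sum_distrib_left algebra_simps)
  qed
  have "sw3 xs \<Phi> = sum_list (map (\<lambda>(a,b,c). \<Sum>u\<in>F. \<Sum>v\<in>F. \<Sum>w\<in>F. \<Phi> u v w * (rep a u * rep b v * rep c w)) xs)"
    unfolding sw3_def by (rule arg_cong[where f=sum_list], rule map_cong) (auto simp: ex)
  also have "\<dots> = (\<Sum>u\<in>F. \<Sum>v\<in>F. \<Sum>w\<in>F. \<Phi> u v w * sw3 xs (\<lambda>a b c. rep a u * rep b v * rep c w))"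
    unfolding sw3_def
    by (induction xs) (auto simp: sum.distrib algebra_simps)
  finally show ?thesis .
qed

lemma teq3_Tri: assumes "teq3 sc xs ys" "Tri \<Phi>" shows "sw3 xs \<Phi> = sw3 ys \<Phi>"
proof -
  define F where "F = (\<Union>p\<in>set xs \<union> set ys. supp (fst p) \<union> supp (fst (snd p)) \<union> supp (snd (snd p)))"
  have F: "finite F" unfolding F_def by (auto simp: finite_supp)
  have s1: "supp a \<subseteq> F \<and> supp b \<subseteq> F \<and> supp c \<subseteq> F" if "(a,b,c) \<in> set xs" for a b c
    using that unfolding F_def by force
  have s2: "supp a \<subseteq> F \<and> supp b \<subseteq> F \<and> supp c \<subseteq> F" if "(a,b,c) \<in> set ys" for a b c
    using that unfolding F_def by force
  have eq: "sw3 xs (\<lambda>a b c. rep a u * rep b v * rep c w) = sw3 ys (\<lambda>a b c. rep a u * rep b v * rep c w)" for u v w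
    using assms(1) linear_Lin[OF Lin_rep] unfolding teq3_def sw3_def by blast
  show ?thesis using sw3_expand[OF F s1 assms(2)] sw3_expand[OF F s2 assms(2)] eq by simp
qed

lemma teq2I: "(\<And>f g. Lin f \<Longrightarrow> Lin g \<Longrightarrow> sw xs (\<lambda>a b. f a * g b) = sw ys (\<lambda>a b. f a * g b)) \<Longrightarrow> teq2 sc xs ys"
  unfolding teq2_def sw_def using Lin_linear by blast

lemma teq3I: "(\<And>f g h. Lin f \<Longrightarrow> Lin g \<Longrightarrow> Lin h \<Longrightarrow> sw3 xs (\<lambda>a b c. f a * g b * h c) = sw3 ys (\<lambda>a b c. f a * g b * h c)) \<Longrightarrow> teq3 sc xs ys"
  unfolding teq3_def sw3_def using Lin_linear by blast

lemma Lin_mult_r: "Lin F \<Longrightarrow> Lin (\<lambda>x. F x * c)"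
  unfolding Lin_def by (simp add: algebra_simps)
lemma Lin_mult_l: "Lin F \<Longrightarrow> Lin (\<lambda>x. c * F x)"
  unfolding Lin_def by (simp add: algebra_simps)
lemma Lin_add: "Lin F \<Longrightarrow> Lin G \<Longrightarrow> Lin (\<lambda>x. F x + G x)"
  unfolding Lin_def by (simp add: algebra_simps)
lemma Lin_sw: "(\<And>a b. Lin (\<lambda>x. G x a b)) \<Longrightarrow> Lin (\<lambda>x. sw L (G x))"
  unfolding Lin_def sw_def by (induction L) (auto simp: algebra_simps)
lemma Lin_sw3: "(\<And>a b c. Lin (\<lambda>x. G x a b c)) \<Longrightarrow> Lin (\<lambda>x. sw3 L (G x))"
  unfolding Lin_def sw3_def by (induction L) (auto simp: algebra_simps)
lemma Lin_comp: "Lin f \<Longrightarrow> LinA M \<Longrightarrow> Lin (\<lambda>x. f (M x))"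
  unfolding Lin_def LinA_def by simp
lemma LinA_id: "LinA (\<lambda>x. x)"
  unfolding LinA_def by simp
lemma LinA_mult_r: "LinA M \<Longrightarrow> LinA (\<lambda>x. M x * c)"
  unfolding LinA_def by (simp add: distrib_right sc_mult_left)
lemma LinA_mult_l: "LinA M \<Longrightarrow> LinA (\<lambda>x. c * M x)"
  unfolding LinA_def by (auto simp: distrib_left) (metis sc_mult_right)
lemma LinA_comp: "LinA S \<Longrightarrow> LinA M \<Longrightarrow> LinA (\<lambda>x. S (M x))"
  unfolding LinA_def by simp
lemma LinA_linear: "Vector_Spaces.linear sc sc S \<Longrightarrow> LinA S"
  unfolding LinA_def by (simp add: Vector_Spaces.linear_def module_hom_def module_hom_axioms_def)

lemma sw_append: "sw (xs @ ys) F = sw xs F + sw ys F"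
  unfolding sw_def by simp
lemma sw_Nil[simp]: "sw [] F = 0" unfolding sw_def by simp
lemma sw_Cons[simp]: "sw ((a,b) # xs) F = F a b + sw xs F" unfolding sw_def by simp
lemma sw_cmult_l: "sw L (\<lambda>a b. c * F a b) = c * sw L F"
  unfolding sw_def by (induction L) (auto simp: algebra_simps)
lemma sw_cmult_r: "sw L (\<lambda>a b. F a b * c) = sw L F * c"
  unfolding sw_def by (induction L) (auto simp: algebra_simps)
lemma sw_zero[simp]: "sw L (\<lambda>a b. 0) = 0"
  unfolding sw_def by (induction L) auto
lemma sw_add: "sw L (\<lambda>a b. F a b + G a b) = sw L F + sw L G"
  unfolding sw_def by (induction L) (auto simp: algebra_simps)
lemma sw_swap: "sw L (\<lambda>a b. sw M (\<lambda>c d. F a b c d)) = sw M (\<lambda>c d. sw L (\<lambda>a b. F a b c d))"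
  unfolding sw_def by (induction L) (auto simp: sw_add[unfolded sw_def])
lemma sw_cong: "(\<And>a b. (a,b) \<in> set L \<Longrightarrow> F a b = G a b) \<Longrightarrow> sw L F = sw L G"
  unfolding sw_def by (induction L) auto

lemma Lin_sum_map: "Lin f \<Longrightarrow> f (sum_list (map (\<lambda>(a,b). P a b) L)) = sw L (\<lambda>a b. f (P a b))"
  unfolding sw_def by (induction L) (auto simp: Lin_def Lin_0)

lemma sum_list_concat_map: "sum_list (map F (concat xss)) = sum_list (map (\<lambda>xs. sum_list (map F xs)) xss)"
  by (induction xss) auto

lemma sw_concat: "sw (concat (map (\<lambda>(a,b). Q a b) L)) F = sw L (\<lambda>a b. sw (Q a b) F)"
  unfolding sw_def by (induction L) auto
lemma sw_map: "sw (map (\<lambda>(a,b). (P a b, R a b)) L) F = sw L (\<lambda>a b. F (P a b) (R a b))"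
  unfolding sw_def by (induction L) auto
lemma sw3_concat: "sw3 (concat (map (\<lambda>(a,b). Q a b) L)) F = sw L (\<lambda>a b. sw3 (Q a b) F)"
  unfolding sw_def sw3_def by (induction L) auto
lemma sw3_map: "sw3 (map (\<lambda>(a,b). (P a b, R a b, U a b)) L) F = sw L (\<lambda>a b. F (P a b) (R a b) (U a b))"
  unfolding sw_def sw3_def by (induction L) auto
lemma sw3_concat3: "sw3 (concat (map (\<lambda>(a,b,c). Q a b c) L)) F = sw3 L (\<lambda>a b c. sw3 (Q a b c) F)"
  unfolding sw3_def by (induction L) auto
lemma sw_concat3: "sw (concat (map (\<lambda>(a,b,c). Q a b c) L)) F = sw3 L (\<lambda>a b c. sw (Q a b c) F)"
  unfolding sw_def sw3_def by (induction L) auto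

lemma sw3_map_Pair: "sw3 (map (Pair a) L) F = sw L (\<lambda>c d. F a c d)"
  unfolding sw_def sw3_def by (induction L) auto
lemma sw_map_id: "sw (map (\<lambda>(a,b). (a, b)) L) F = sw L F"
  unfolding sw_def by (induction L) auto

lemmas sw_conv = sw_concat sw_map sw3_concat sw3_map sw3_concat3 sw_concat3 sw3_map_Pair

end




locale hopf = kalg sc for sc :: "'k::field \<Rightarrow> 'a::comm_ring_1 \<Rightarrow> 'a" +
  fixes D :: "'a \<Rightarrow> ('a \<times> 'a) list" and e :: "'a \<Rightarrow> 'k" and S :: "'a \<Rightarrow> 'a"
  assumes hopf: "hopf_algebra sc D e S"
begin

lemma lin2D: "lin2 sc D" using hopf by (simp add: hopf_algebra_def)

lemma Lin_e: "Lin e" using hopf by (simp add: hopf_algebra_def Lin_linear)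
lemma LinA_S: "LinA S" using hopf by (simp add: hopf_algebra_def LinA_linear)
lemma e_mult: "e (x * y) = e x * e y" using hopf by (simp add: hopf_algebra_def)
lemma e_one: "e 1 = 1" using hopf by (simp add: hopf_algebra_def)

lemma Lin_Dsw: assumes "\<And>b. Lin (\<lambda>a. G a b)" "\<And>a. Lin (\<lambda>b. G a b)"
  shows "Lin (\<lambda>x. sw (D x) G)"
proof -
  have B: "Bil G" using assms by (simp add: Bil_def)
  have "sw (D (x + y)) G = sw (D x) G + sw (D y) G" for x y
    using teq2_Bil[OF _ B, of "D (x+y)" "D x @ D y"] lin2D by (simp add: lin2_def sw_append)
  moreover have "sw (D (sc c x)) G = c * sw (D x) G" for c x
  proof -
    have "sw (D (sc c x)) G = sw (map (\<lambda>(a,b). (sc c a, b)) (D x)) G"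
      using teq2_Bil[OF _ B, of "D (sc c x)"] lin2D by (simp add: lin2_def)
    also have "\<dots> = sw (D x) (\<lambda>a b. c * G a b)"
      by (simp add: sw_map[of "\<lambda>a b. sc c a" "\<lambda>a b. b", simplified]) (rule sw_cong, use assms(1) in \<open>auto simp: Lin_def\<close>)
    finally show ?thesis by (simp add: sw_cmult_l)
  qed
  ultimately show ?thesis by (simp add: Lin_def)
qed

lemma Lin_D: "(\<And>b. Lin (\<lambda>a. G a b)) \<Longrightarrow> (\<And>a. Lin (\<lambda>b. G a b)) \<Longrightarrow> LinA M \<Longrightarrow> Lin (\<lambda>x. sw (D (M x)) G)"
  using Lin_comp[OF Lin_Dsw] by blast

lemma coassoc:
  assumes "\<And>b c. Lin (\<lambda>a. \<Phi> a b c)" "\<And>a c. Lin (\<lambda>b. \<Phi> a b c)" "\<And>a b. Lin (\<lambda>c. \<Phi> a b c)"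
  shows "sw (D x) (\<lambda>a b. sw (D a) (\<lambda>c d. \<Phi> c d b)) = sw (D x) (\<lambda>a b. sw (D b) (\<lambda>c d. \<Phi> a c d))"
proof -
  have T: "Tri \<Phi>" using assms by (simp add: Tri_def)
  have "teq3 sc [(c, d, b). (a, b) \<leftarrow> D x, (c, d) \<leftarrow> D a] [(a, c, d). (a, b) \<leftarrow> D x, (c, d) \<leftarrow> D b]"
    using hopf by (simp add: hopf_algebra_def)
  from teq3_Tri[OF this T] show ?thesis by (simp add: sw_conv)
qed

lemma counit_sum: "sum_list (map (\<lambda>(a,b). sc (e a) b) (D x)) = x" "sum_list (map (\<lambda>(a,b). sc (e b) a) (D x)) = x"
  using hopf by (simp_all add: hopf_algebra_def)

lemma counitL: "Lin \<Psi> \<Longrightarrow> sw (D x) (\<lambda>a b. e a * \<Psi> b) = \<Psi> x"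
  using Lin_sum_map[of \<Psi> "\<lambda>a b. sc (e a) b" "D x"] counit_sum(1)[of x] by (simp add: Lin_def)
lemma counitR: "Lin \<Psi> \<Longrightarrow> sw (D x) (\<lambda>a b. \<Psi> a * e b) = \<Psi> x"
  using Lin_sum_map[of \<Psi> "\<lambda>a b. sc (e b) a" "D x"] counit_sum(2)[of x] by (simp add: Lin_def mult.commute)

lemma anti_sum: "sum_list (map (\<lambda>(a,b). S a * b) (D x)) = sc (e x) 1" "sum_list (map (\<lambda>(a,b). a * S b) (D x)) = sc (e x) 1"
  using hopf by (simp_all add: hopf_algebra_def)

lemma antiL: "Lin \<Psi> \<Longrightarrow> sw (D x) (\<lambda>a b. \<Psi> (S a * b)) = e x * \<Psi> 1"
  using Lin_sum_map[of \<Psi> "\<lambda>a b. S a * b" "D x"] anti_sum(1)[of x] by (simp add: Lin_def)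
lemma antiR: "Lin \<Psi> \<Longrightarrow> sw (D x) (\<lambda>a b. \<Psi> (a * S b)) = e x * \<Psi> 1"
  using Lin_sum_map[of \<Psi> "\<lambda>a b. a * S b" "D x"] anti_sum(2)[of x] by (simp add: Lin_def)

lemma mult:
  assumes "\<And>b. Lin (\<lambda>a. \<Phi> a b)" "\<And>a. Lin (\<lambda>b. \<Phi> a b)"
  shows "sw (D (x * y)) \<Phi> = sw (D x) (\<lambda>a b. sw (D y) (\<lambda>c d. \<Phi> (a * c) (b * d)))"
proof -
  have B: "Bil \<Phi>" using assms by (simp add: Bil_def)
  have "teq2 sc (D (x * y)) [(a * c, b * d). (a, b) \<leftarrow> D x, (c, d) \<leftarrow> D y]"
    using hopf by (simp add: hopf_algebra_def)
  from teq2_Bil[OF this B] show ?thesis by (simp add: sw_conv)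
qed

lemma unit:
  assumes "\<And>b. Lin (\<lambda>a. \<Phi> a b)" "\<And>a. Lin (\<lambda>b. \<Phi> a b)"
  shows "sw (D 1) \<Phi> = \<Phi> 1 1"
proof -
  have B: "Bil \<Phi>" using assms by (simp add: Bil_def)
  have "teq2 sc (D 1) [(1,1)]" using hopf by (simp add: hopf_algebra_def)
  from teq2_Bil[OF this B] show ?thesis by simp
qed

lemmas LinR = Lin_mult_r Lin_mult_l Lin_sw Lin_D Lin_comp[OF Lin_e] LinA_id LinA_mult_r LinA_mult_l LinA_comp[OF LinA_S]

lemma S_one: "S 1 = 1"
proof (rule separate)
  fix f assume f: "Lin f"
  have "f (S 1) = sw (D 1) (\<lambda>a b. f (S a * b))" by (subst unit) (auto intro!: LinR Lin_comp[OF f])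
  also have "\<dots> = f 1" by (subst antiL) (auto simp: e_one f)
  finally show "f (S 1) = f 1" .
qed

lemma e_S: "e (S x) = e x"
proof -
  have "e (S x) = sw (D x) (\<lambda>a b. e (S a) * e b)" by (subst counitR) (auto intro!: LinR)
  also have "\<dots> = sw (D x) (\<lambda>a b. e (S a * b))" by (simp add: e_mult)
  also have "\<dots> = e x" by (subst antiL) (auto simp: e_one Lin_e)
  finally show ?thesis .
qed

lemma S_mult: "S (x * y) = S x * S y"
proof (rule separate)
  fix f assume f: "Lin f"
  note L = LinR Lin_comp[OF f]
  have "f (S (x*y)) = sw (D (x*y)) (\<lambda>u v. f (S u) * e v)" by (subst counitR) (auto intro!: L)
  also have "\<dots> = sw (D x) (\<lambda>a b. sw (D y) (\<lambda>c d. f (S (a*c)) * e (b*d)))" by (subst mult) (auto intro!: L)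
  also have "\<dots> = sw (D x) (\<lambda>a b. sw (D y) (\<lambda>c d. e b * (e d * f (S (a*c)))))" by (simp add: e_mult ac_simps)
  also have "\<dots> = sw (D x) (\<lambda>a b. sw (D y) (\<lambda>c d. sw (D b) (\<lambda>p q. e d * f (S (a*c) * (p * S q)))))"
    by (subst antiR) (auto intro!: L)
  also have "\<dots> = sw (D x) (\<lambda>a b. sw (D y) (\<lambda>c d. sw (D b) (\<lambda>p q. sw (D d) (\<lambda>r s. f (S (a*c) * (p * S q) * (r * S s))))))"
    by (subst antiR) (auto intro!: L)
  also have "\<dots> = sw (D x) (\<lambda>a b. sw (D b) (\<lambda>p q. sw (D y) (\<lambda>c d. sw (D d) (\<lambda>r s. f (S (a*c) * (p * S q) * (r * S s))))))"
    by (subst sw_swap) (rule refl)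
  also have "\<dots> = sw (D x) (\<lambda>a b. sw (D a) (\<lambda>a1 a2. sw (D y) (\<lambda>c d. sw (D d) (\<lambda>r s. f (S (a1*c) * (a2 * S b) * (r * S s))))))"
    by (subst coassoc) (auto intro!: L)
  also have "\<dots> = sw (D x) (\<lambda>a b. sw (D a) (\<lambda>a1 a2. sw (D y) (\<lambda>c d. sw (D c) (\<lambda>c1 c2. f (S (a1*c1) * (a2 * S b) * (c2 * S d))))))"
    by (subst (2) coassoc) (auto intro!: L)
  also have "\<dots> = sw (D x) (\<lambda>a b. sw (D y) (\<lambda>c d. sw (D a) (\<lambda>a1 a2. sw (D c) (\<lambda>c1 c2. f (S (a1*c1) * (a2 * c2) * (S b * S d))))))"
    by (subst sw_swap) (simp add: ac_simps)
  also have "\<dots> = sw (D x) (\<lambda>a b. sw (D y) (\<lambda>c d. sw (D (a*c)) (\<lambda>u v. f (S u * v * (S b * S d)))))"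
    by (subst mult) (auto intro!: L)
  also have "\<dots> = sw (D x) (\<lambda>a b. sw (D y) (\<lambda>c d. e (a*c) * f (S b * S d)))"
    by (subst antiL) (auto intro!: L)
  also have "\<dots> = sw (D x) (\<lambda>a b. e a * sw (D y) (\<lambda>c d. e c * f (S b * S d)))"
    by (simp add: e_mult sw_cmult_l mult.assoc)
  also have "\<dots> = sw (D x) (\<lambda>a b. e a * f (S b * S y))"
    by (subst counitL) (auto intro!: L)
  also have "\<dots> = f (S x * S y)"
    by (subst counitL) (auto intro!: L)
  finally show "f (S (x*y)) = f (S x * S y)" .
qed

lemma S_S: "S (S x) = x"
proof (rule separate)
  fix f assume f: "Lin f"
  note L = LinR Lin_comp[OF f]
  have "f (S (S x)) = sw (D x) (\<lambda>a b. f (S (S a)) * e b)" by (subst counitR) (auto intro!: L)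
  also have "\<dots> = sw (D x) (\<lambda>a b. sw (D b) (\<lambda>c d. f (S (S a) * (S c * d))))"
    by (subst antiL) (auto intro!: L simp: mult.commute)
  also have "\<dots> = sw (D x) (\<lambda>a d. sw (D a) (\<lambda>a1 c. f (S (S a1) * (S c * d))))"
    by (subst coassoc) (auto intro!: L)
  also have "\<dots> = sw (D x) (\<lambda>a d. sw (D a) (\<lambda>a1 c. f (S (S a1 * c) * d)))"
    by (simp add: S_mult mult.assoc)
  also have "\<dots> = sw (D x) (\<lambda>a d. e a * f d)"
    by (subst antiL) (auto intro!: L simp: S_one)
  also have "\<dots> = f x" by (subst counitL) (auto intro!: L)
  finally show "f (S (S x)) = f x" .
qed

lemma antiL_D:
  assumes "\<And>b. Lin (\<lambda>a. G a b)" "\<And>a. Lin (\<lambda>b. G a b)"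
  shows "sw (D x) (\<lambda>a b. sw (D (S a * b)) G) = e x * G 1 1"
  using antiL[OF Lin_Dsw[OF assms], of x] unit[OF assms] by simp

lemma antiR_D:
  assumes "\<And>b. Lin (\<lambda>a. G a b)" "\<And>a. Lin (\<lambda>b. G a b)"
  shows "sw (D x) (\<lambda>a b. sw (D (a * S b)) G) = e x * G 1 1"
  using antiR[OF Lin_Dsw[OF assms], of x] unit[OF assms] by simp

lemma unitDD:
  assumes G1: "\<And>b. Lin (\<lambda>a. G a b)" and G2: "\<And>a. Lin (\<lambda>b. G a b)"
  shows "sw (D b) (\<lambda>p q. sw (D p) (\<lambda>b1 b2. sw (D q) (\<lambda>b3 b4. G (b1 * S b4) (b2 * S b3)))) = e b * G 1 1"
proof -
  note L = LinR Lin_comp[OF G1] Lin_comp[OF G2]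
  have "sw (D b) (\<lambda>p q. sw (D p) (\<lambda>b1 b2. sw (D q) (\<lambda>b3 b4. G (b1 * S b4) (b2 * S b3))))
      = sw (D b) (\<lambda>b1 r. sw (D r) (\<lambda>b2 q. sw (D q) (\<lambda>b3 b4. G (b1 * S b4) (b2 * S b3))))"
    by (subst coassoc) (auto intro!: L)
  also have "\<dots> = sw (D b) (\<lambda>b1 r. sw (D r) (\<lambda>m b4. sw (D m) (\<lambda>b2 b3. G (b1 * S b4) (b2 * S b3))))"
    by (subst coassoc) (auto intro!: L)
  also have "\<dots> = sw (D b) (\<lambda>b1 r. sw (D r) (\<lambda>m b4. e m * G (b1 * S b4) 1))"
    by (subst antiR) (auto intro!: L)
  also have "\<dots> = sw (D b) (\<lambda>b1 r. G (b1 * S r) 1)"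
    by (subst counitL) (auto intro!: L)
  also have "\<dots> = e b * G 1 1"
    by (subst antiR) (auto intro!: L)
  finally show ?thesis .
qed

lemma DS:
  assumes P1: "\<And>b. Lin (\<lambda>a. \<Phi> a b)" and P2: "\<And>a. Lin (\<lambda>b. \<Phi> a b)"
  shows "sw (D (S x)) \<Phi> = sw (D x) (\<lambda>a b. \<Phi> (S b) (S a))"
proof -
  note L = LinR Lin_comp[OF P1] Lin_comp[OF P2]
  have "sw (D (S x)) \<Phi> = sw (D x) (\<lambda>a b. sw (D (S a)) \<Phi> * e b)"
    by (subst counitR) (auto intro!: L)
  also have "\<dots> = sw (D x) (\<lambda>a b. sw (D (S a)) (\<lambda>u v. e b * \<Phi> u v))"
    by (simp add: sw_cmult_l mult.commute)
  also have "\<dots> = sw (D x) (\<lambda>a b. sw (D (S a)) (\<lambda>u v. sw (D b) (\<lambda>p q. sw (D p) (\<lambda>b1 b2. sw (D q) (\<lambda>b3 b4. \<Phi> (u * (b1 * S b4)) (v * (b2 * S b3)))))))"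
    by (subst unitDD) (auto intro!: L)
  also have "\<dots> = sw (D x) (\<lambda>a b. sw (D b) (\<lambda>p q. sw (D (S a)) (\<lambda>u v. sw (D p) (\<lambda>b1 b2. sw (D q) (\<lambda>b3 b4. \<Phi> (u * (b1 * S b4)) (v * (b2 * S b3)))))))"
    by (subst sw_swap) (rule refl)
  also have "\<dots> = sw (D x) (\<lambda>a' q. sw (D a') (\<lambda>a p. sw (D (S a)) (\<lambda>u v. sw (D p) (\<lambda>b1 b2. sw (D q) (\<lambda>b3 b4. \<Phi> (u * (b1 * S b4)) (v * (b2 * S b3)))))))"
    by (subst coassoc) (auto intro!: L)
  also have "\<dots> = sw (D x) (\<lambda>a' q. sw (D a') (\<lambda>a p. sw (D (S a)) (\<lambda>u v. sw (D p) (\<lambda>b1 b2. sw (D q) (\<lambda>b3 b4. \<Phi> (u * b1 * S b4) (v * b2 * S b3))))))"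
    by (simp add: mult.assoc)
  also have "\<dots> = sw (D x) (\<lambda>a' q. sw (D a') (\<lambda>a p. sw (D (S a * p)) (\<lambda>w z. sw (D q) (\<lambda>b3 b4. \<Phi> (w * S b4) (z * S b3)))))"
    by (subst mult) (auto intro!: L)
  also have "\<dots> = sw (D x) (\<lambda>a' q. e a' * sw (D q) (\<lambda>b3 b4. \<Phi> (S b4) (S b3)))"
    by (subst antiL_D) (auto intro!: L)
  also have "\<dots> = sw (D x) (\<lambda>a b. \<Phi> (S b) (S a))"
    by (subst counitL) (auto intro!: L)
  finally show ?thesis .
qed

end



lemma (in kalg) sw_Cons2: "sw (p # xs) F = F (fst p) (snd p) + sw xs F"
  unfolding sw_def by (cases p) auto

lemma (in kalg) sw3_comult3: "sw3 (comult3 D h) F = sw (D h) (\<lambda>a b. sw (D b) (\<lambda>c d. F a c d))"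
  unfolding comult3_def by (simp add: sw_conv)

locale hb = kalg sc + H1: hopf sc D e S + H2: hopf sc D' e' T
  for sc :: "'k::field \<Rightarrow> 'a::comm_ring_1 \<Rightarrow> 'a" and D e S D' e' T +
  assumes brace_ax: "\<forall>h. teq3 sc [(a, c, d). (a, b) \<leftarrow> D' h, (c, d) \<leftarrow> D b]
                  [(p * S y * r, q, s). (x, y, z) \<leftarrow> comult3 D h, (p, q) \<leftarrow> D' x, (r, s) \<leftarrow> D' z]"
begin

lemmas L0 = H1.LinR H2.LinR

lemma brace:
  assumes "\<And>b c. Lin (\<lambda>a. \<Phi> a b c)" "\<And>a c. Lin (\<lambda>b. \<Phi> a b c)" "\<And>a b. Lin (\<lambda>c. \<Phi> a b c)"
  shows "sw (D' x) (\<lambda>a b. sw (D b) (\<lambda>c d. \<Phi> a c d)) =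
    sw (D x) (\<lambda>u v. sw (D v) (\<lambda>y z. sw (D' u) (\<lambda>p q. sw (D' z) (\<lambda>r s. \<Phi> (p * S y * r) q s))))"
proof -
  have T: "Tri \<Phi>" using assms by (simp add: Tri_def)
  from teq3_Tri[OF brace_ax[rule_format, of x] T] show ?thesis
    by (simp add: sw_conv sw3_comult3)
qed

lemma G1: "e x = e' (S x)"
proof -
  have c1: "sw (D' u) (\<lambda>p q. e' p * e q) = e u" for u by (rule H2.counitL[OF H1.Lin_e])
  have "e x = sw (D' x) (\<lambda>a b. e' a * e b)" by (rule c1[symmetric])
  also have "\<dots> = sw (D' x) (\<lambda>a b. sw (D b) (\<lambda>c d. e c * (e' a * e d)))"
    by (subst H1.counitL) (auto intro!: L0)
  also have "\<dots> = sw (D x) (\<lambda>u v. sw (D v) (\<lambda>y z. sw (D' u) (\<lambda>p q. sw (D' z) (\<lambda>r s. e q * (e' (p * S y * r) * e s)))))"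
    by (subst brace) (auto intro!: L0)
  also have "\<dots> = sw (D x) (\<lambda>u v. sw (D v) (\<lambda>y z. sw (D' u) (\<lambda>p q. sw (D' z) (\<lambda>r s. (e' (S y) * (e' p * e q)) * (e' r * e s)))))"
    by (simp add: H2.e_mult ac_simps)
  also have "\<dots> = sw (D x) (\<lambda>u v. sw (D v) (\<lambda>y z. sw (D' u) (\<lambda>p q. (e' (S y) * (e' p * e q)) * e z)))"
    by (simp only: sw_cmult_l c1)
  also have "\<dots> = sw (D x) (\<lambda>u v. sw (D v) (\<lambda>y z. sw (D' u) (\<lambda>p q. (e' p * e q) * (e' (S y) * e z))))"
    by (simp add: ac_simps)
  also have "\<dots> = sw (D x) (\<lambda>u v. sw (D v) (\<lambda>y z. e u * (e' (S y) * e z)))"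
    by (simp only: sw_cmult_r c1)
  also have "\<dots> = sw (D x) (\<lambda>u v. e u * sw (D v) (\<lambda>y z. e' (S y) * e z))"
    by (simp only: sw_cmult_l)
  also have "\<dots> = sw (D x) (\<lambda>y z. e' (S y) * e z)"
    by (subst H1.counitL) (auto intro!: L0)
  also have "\<dots> = e' (S x)"
    by (subst H1.counitR) (auto intro!: L0)
  finally show ?thesis .
qed

lemma ee: "e' = e"
proof
  fix x show "e' x = e x" using G1[of "S x"] by (simp add: H1.S_S H1.e_S)
qed

end

locale hbe = kalg sc + H1: hopf sc D e S + H2: hopf sc D' e T
  for sc :: "'k::field \<Rightarrow> 'a::comm_ring_1 \<Rightarrow> 'a" and D e S D' T +
  assumes brace_ax: "\<forall>h. teq3 sc [(a, c, d). (a, b) \<leftarrow> D' h, (c, d) \<leftarrow> D b]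
                  [(p * S y * r, q, s). (x, y, z) \<leftarrow> comult3 D h, (p, q) \<leftarrow> D' x, (r, s) \<leftarrow> D' z]"

lemma (in hb) hbe: "hbe sc D e S D' T"
proof -
  have h2: "hopf_algebra sc D' e T" using H2.hopf ee by simp
  show ?thesis by unfold_locales (use h2 H1.hopf brace_ax kalg in auto)
qed

context hbe
begin

lemmas L0 = H1.LinR H2.LinR

lemma brace:
  assumes "\<And>b c. Lin (\<lambda>a. \<Phi> a b c)" "\<And>a c. Lin (\<lambda>b. \<Phi> a b c)" "\<And>a b. Lin (\<lambda>c. \<Phi> a b c)"
  shows "sw (D' x) (\<lambda>a b. sw (D b) (\<lambda>c d. \<Phi> a c d)) =
    sw (D x) (\<lambda>u v. sw (D v) (\<lambda>y z. sw (D' u) (\<lambda>p q. sw (D' z) (\<lambda>r s. \<Phi> (p * S y * r) q s))))"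
proof -
  have T: "Tri \<Phi>" using assms by (simp add: Tri_def)
  from teq3_Tri[OF brace_ax[rule_format, of x] T] show ?thesis
    by (simp add: sw_conv sw3_comult3)
qed

definition rsw :: "'a \<Rightarrow> ('a \<Rightarrow> 'a \<Rightarrow> 'k) \<Rightarrow> 'k" where
  "rsw x \<Phi> = sw (D x) (\<lambda>a b. sw (D' b) (\<lambda>p q. \<Phi> (S a * p) q))"

lemma rsw_rho: "sw (brace_rho D S D' x) \<Phi> = rsw x \<Phi>"
  unfolding brace_rho_def rsw_def by (simp add: sw_conv)

lemma Lin_rsw:
  assumes P1: "\<And>b. Lin (\<lambda>a. \<Phi> a b)" and P2: "\<And>a. Lin (\<lambda>b. \<Phi> a b)" and M: "LinA M"
  shows "Lin (\<lambda>x. rsw (M x) \<Phi>)"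
  unfolding rsw_def using M by (auto intro!: L0 Lin_comp[OF P1] Lin_comp[OF P2])

lemma Lin_rsw_in: "(\<And>h y. Lin (\<lambda>z. G z h y)) \<Longrightarrow> Lin (\<lambda>z. rsw x (G z))"
  unfolding rsw_def by (auto intro!: L0)

lemmas L1 = L0 Lin_rsw Lin_rsw_in

lemma rsw_swap: "rsw x (\<lambda>h y. sw L (\<lambda>p q. K h y p q)) = sw L (\<lambda>p q. rsw x (\<lambda>h y. K h y p q))"
  by (induction L) (simp_all add: rsw_def sw_add sw_Cons2)

lemma rsw_cmult_l: "rsw x (\<lambda>h y. c * K h y) = c * rsw x K"
  unfolding rsw_def by (simp add: sw_cmult_l)
lemma rsw_cmult_r: "rsw x (\<lambda>h y. K h y * c) = rsw x K * c"
  unfolding rsw_def by (simp add: sw_cmult_r)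

lemma antiL_D':
  assumes "\<And>b. Lin (\<lambda>a. G a b)" "\<And>a. Lin (\<lambda>b. G a b)"
  shows "sw (D x) (\<lambda>a b. sw (D' (S a * b)) G) = e x * G 1 1"
  using H1.antiL[OF H2.Lin_Dsw[OF assms], of x] H2.unit[OF assms] by simp

lemma antiR_D':
  assumes "\<And>b. Lin (\<lambda>a. G a b)" "\<And>a. Lin (\<lambda>b. G a b)"
  shows "sw (D' x) (\<lambda>a b. sw (D' (a * T b)) G) = e x * G 1 1"
  using H2.antiR[OF H2.Lin_Dsw[OF assms], of x] H2.unit[OF assms] by simp

lemma rsw_one:
  assumes P1: "\<And>b. Lin (\<lambda>a. \<Phi> a b)" and P2: "\<And>a. Lin (\<lambda>b. \<Phi> a b)"
  shows "rsw 1 \<Phi> = \<Phi> 1 1"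
proof -
  note L = L1 Lin_comp[OF P1] Lin_comp[OF P2]
  have "rsw 1 \<Phi> = sw (D' 1) (\<lambda>p q. \<Phi> (S 1 * p) q)"
    unfolding rsw_def by (rule H1.unit) (auto intro!: L)
  also have "\<dots> = \<Phi> (S 1 * 1) 1" by (rule H2.unit) (auto intro!: L)
  finally show ?thesis by (simp add: H1.S_one)
qed

lemma rsw_mult:
  assumes P1: "\<And>b. Lin (\<lambda>a. \<Phi> a b)" and P2: "\<And>a. Lin (\<lambda>b. \<Phi> a b)"
  shows "rsw (x * y) \<Phi> = rsw x (\<lambda>h a. rsw y (\<lambda>h' b. \<Phi> (h * h') (a * b)))"
proof -
  note L = L1 Lin_comp[OF P1] Lin_comp[OF P2]
  have "rsw (x * y) \<Phi> = sw (D x) (\<lambda>a b. sw (D y) (\<lambda>c d. sw (D' (b * d)) (\<lambda>p q. \<Phi> (S (a * c) * p) q)))"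
    unfolding rsw_def by (subst H1.mult) (auto intro!: L)
  also have "\<dots> = sw (D x) (\<lambda>a b. sw (D y) (\<lambda>c d. sw (D' b) (\<lambda>p q. sw (D' d) (\<lambda>r s. \<Phi> (S (a * c) * (p * r)) (q * s)))))"
    by (subst H2.mult) (auto intro!: L)
  also have "\<dots> = sw (D x) (\<lambda>a b. sw (D' b) (\<lambda>p q. sw (D y) (\<lambda>c d. sw (D' d) (\<lambda>r s. \<Phi> (S a * p * (S c * r)) (q * s)))))"
    by (subst sw_swap) (simp add: H1.S_mult ac_simps)
  also have "\<dots> = rsw x (\<lambda>h a. rsw y (\<lambda>h' b. \<Phi> (h * h') (a * b)))"
    unfolding rsw_def by (rule refl)
  finally show ?thesis .
qed

lemma rsw_counitL: "Lin \<Psi> \<Longrightarrow> rsw x (\<lambda>h y. e h * \<Psi> y) = \<Psi> x"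
proof -
  assume P: "Lin \<Psi>"
  have "rsw x (\<lambda>h y. e h * \<Psi> y) = sw (D x) (\<lambda>a b. e a * sw (D' b) (\<lambda>p q. e p * \<Psi> q))"
    unfolding rsw_def by (simp add: H1.e_mult H1.e_S sw_cmult_l mult.assoc)
  also have "\<dots> = sw (D x) (\<lambda>a b. e a * \<Psi> b)" by (simp add: H2.counitL P)
  also have "\<dots> = \<Psi> x" by (simp add: H1.counitL P)
  finally show ?thesis .
qed

lemma rsw_counitR: "Lin \<Psi> \<Longrightarrow> rsw x (\<lambda>h y. \<Psi> h * e y) = e x * \<Psi> 1"
proof -
  assume P: "Lin \<Psi>"
  have "rsw x (\<lambda>h y. \<Psi> h * e y) = sw (D x) (\<lambda>a b. \<Psi> (S a * b))"
    unfolding rsw_def by (subst H2.counitR) (auto intro!: L0 Lin_comp[OF P])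
  also have "\<dots> = e x * \<Psi> 1" by (simp add: H1.antiL P)
  finally show ?thesis .
qed

lemma C1:
  assumes P1: "\<And>b. Lin (\<lambda>a. \<Phi> a b)" and P2: "\<And>a. Lin (\<lambda>b. \<Phi> a b)"
  shows "sw (D' x) \<Phi> = sw (D x) (\<lambda>a b. rsw b (\<lambda>h y. \<Phi> (a * h) y))"
proof -
  note L = L1 Lin_comp[OF P1] Lin_comp[OF P2]
  have "sw (D' x) \<Phi> = sw (D x) (\<lambda>a' d. e a' * sw (D' d) (\<lambda>p q. \<Phi> p q))"
    by (subst H1.counitL) (auto intro!: L)
  also have "\<dots> = sw (D x) (\<lambda>a' d. sw (D a') (\<lambda>a c. sw (D' d) (\<lambda>p q. \<Phi> (a * S c * p) q)))"
    by (subst H1.antiR) (auto intro!: L)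
  also have "\<dots> = sw (D x) (\<lambda>a b. sw (D b) (\<lambda>c d. sw (D' d) (\<lambda>p q. \<Phi> (a * S c * p) q)))"
    by (subst H1.coassoc) (auto intro!: L)
  also have "\<dots> = sw (D x) (\<lambda>a b. rsw b (\<lambda>h y. \<Phi> (a * h) y))"
    unfolding rsw_def by (simp add: mult.assoc)
  finally show ?thesis .
qed

lemma C2:
  assumes "\<And>b c. Lin (\<lambda>a. \<Phi> a b c)" "\<And>a c. Lin (\<lambda>b. \<Phi> a b c)" "\<And>a b. Lin (\<lambda>c. \<Phi> a b c)"
  shows "rsw x (\<lambda>h y. sw (D y) (\<lambda>c d. \<Phi> h c d)) = sw (D x) (\<lambda>u v. rsw u (\<lambda>h1 a1. rsw v (\<lambda>h2 a2. \<Phi> (h1 * h2) a1 a2)))"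
proof -
  note L = L1 Lin_comp[OF assms(1)] Lin_comp[OF assms(2)] Lin_comp[OF assms(3)]
  have "rsw x (\<lambda>h y. sw (D y) (\<lambda>c d. \<Phi> h c d)) = sw (D x) (\<lambda>a b. sw (D' b) (\<lambda>p q. sw (D q) (\<lambda>c d. \<Phi> (S a * p) c d)))"
    unfolding rsw_def by (rule refl)
  also have "\<dots> = sw (D x) (\<lambda>a b. sw (D b) (\<lambda>u v. sw (D v) (\<lambda>y z. sw (D' u) (\<lambda>p q. sw (D' z) (\<lambda>r s. \<Phi> (S a * (p * S y * r)) q s)))))"
    by (subst brace) (auto intro!: L)
  also have "\<dots> = sw (D x) (\<lambda>a' v. sw (D a') (\<lambda>a u. sw (D v) (\<lambda>y z. sw (D' u) (\<lambda>p q. sw (D' z) (\<lambda>r s. \<Phi> (S a * (p * S y * r)) q s)))))"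
    by (subst H1.coassoc) (auto intro!: L)
  also have "\<dots> = sw (D x) (\<lambda>a' v. sw (D a') (\<lambda>a u. sw (D' u) (\<lambda>p q. sw (D v) (\<lambda>y z. sw (D' z) (\<lambda>r s. \<Phi> (S a * p * (S y * r)) q s)))))"
    by (subst (2) sw_swap) (simp add: ac_simps)
  also have "\<dots> = sw (D x) (\<lambda>u v. rsw u (\<lambda>h1 a1. rsw v (\<lambda>h2 a2. \<Phi> (h1 * h2) a1 a2)))"
    unfolding rsw_def by (rule refl)
  finally show ?thesis .
qed

end



context hbe
begin

lemmas L2 = L1 Lin_comp

lemma star:
  assumes P1: "\<And>b c. Lin (\<lambda>a. \<Phi> a b c)" and P2: "\<And>a c. Lin (\<lambda>b. \<Phi> a b c)" and P3: "\<And>a b. Lin (\<lambda>c. \<Phi> a b c)"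
  shows "sw (D x) (\<lambda>u v. sw (D' u) (\<lambda>p q. rsw v (\<lambda>h y. sw (D' h) (\<lambda>c d. \<Phi> (p * c) (q * d) y)))) =
         sw (D x) (\<lambda>u v. sw (D' u) (\<lambda>p q. rsw v (\<lambda>h' s. rsw s (\<lambda>h y. \<Phi> (p * h') (q * h) y))))"
proof -
  note L = L1 Lin_comp[OF P1] Lin_comp[OF P2] Lin_comp[OF P3]
  have "sw (D x) (\<lambda>u v. sw (D' u) (\<lambda>p q. rsw v (\<lambda>h y. sw (D' h) (\<lambda>c d. \<Phi> (p * c) (q * d) y))))
      = sw (D x) (\<lambda>u v. rsw v (\<lambda>h y. sw (D' u) (\<lambda>p q. sw (D' h) (\<lambda>c d. \<Phi> (p * c) (q * d) y))))"
    by (subst rsw_swap) (rule refl)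
  also have "\<dots> = sw (D x) (\<lambda>u v. rsw v (\<lambda>h y. sw (D' (u * h)) (\<lambda>c d. \<Phi> c d y)))"
    by (subst H2.mult) (auto intro!: L)
  also have "\<dots> = sw (D' x) (\<lambda>a b. sw (D' a) (\<lambda>c d. \<Phi> c d b))"
    by (subst C1) (auto intro!: L)
  also have "\<dots> = sw (D' x) (\<lambda>a b. sw (D' b) (\<lambda>c d. \<Phi> a c d))"
    by (subst H2.coassoc) (auto intro!: L)
  also have "\<dots> = sw (D' x) (\<lambda>a b. sw (D b) (\<lambda>b1 b2. rsw b2 (\<lambda>h y. \<Phi> a (b1 * h) y)))"
    by (subst C1) (auto intro!: L)
  also have "\<dots> = sw (D x) (\<lambda>u v. sw (D v) (\<lambda>w z. sw (D' u) (\<lambda>p q. sw (D' z) (\<lambda>r s. rsw s (\<lambda>h y. \<Phi> (p * S w * r) (q * h) y)))))"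
    by (subst brace) (auto intro!: L)
  also have "\<dots> = sw (D x) (\<lambda>u v. sw (D' u) (\<lambda>p q. sw (D v) (\<lambda>w z. sw (D' z) (\<lambda>r s. rsw s (\<lambda>h y. \<Phi> (p * (S w * r)) (q * h) y)))))"
    by (subst sw_swap) (simp add: mult.assoc)
  also have "\<dots> = sw (D x) (\<lambda>u v. sw (D' u) (\<lambda>p q. rsw v (\<lambda>h' s. rsw s (\<lambda>h y. \<Phi> (p * h') (q * h) y))))"
    by (simp only: rsw_def)
  finally show ?thesis .
qed

lemma expand:
  assumes linR: "\<And>\<Psi>. (\<And>b c. Lin (\<lambda>a. \<Psi> a b c)) \<Longrightarrow> (\<And>a c. Lin (\<lambda>b. \<Psi> a b c)) \<Longrightarrow> (\<And>a b. Lin (\<lambda>c. \<Psi> a b c)) \<Longrightarrow> Lin (\<lambda>v. R v \<Psi>)"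
    and parR: "\<And>v \<Psi>. (\<And>c d y. Lin (\<lambda>z. \<Psi> z c d y)) \<Longrightarrow> Lin (\<lambda>z. R v (\<Psi> z))"
    and P1: "\<And>b c. Lin (\<lambda>a. \<Phi> a b c)" and P2: "\<And>a c. Lin (\<lambda>b. \<Phi> a b c)" and P3: "\<And>a b. Lin (\<lambda>c. \<Phi> a b c)"
  shows "R x \<Phi> = sw (D x) (\<lambda>a1 b'. sw (D' (S a1)) (\<lambda>p1 q1. sw (D b') (\<lambda>a2 b. sw (D' a2) (\<lambda>p2 q2.
             R b (\<lambda>c d y. \<Phi> (p1 * (p2 * c)) (q1 * (q2 * d)) y)))))"
proof -
  note L = L1 Lin_comp[OF P1] Lin_comp[OF P2] Lin_comp[OF P3]
  have "R x \<Phi> = sw (D x) (\<lambda>a b. e a * R b \<Phi>)"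
    by (subst H1.counitL) (auto intro!: L linR)
  also have "\<dots> = sw (D x) (\<lambda>a b. sw (D a) (\<lambda>a1 a2. sw (D' (S a1 * a2)) (\<lambda>p q. R b (\<lambda>c d y. \<Phi> (p * c) (q * d) y))))"
    by (subst antiL_D') (auto intro!: L parR)
  also have "\<dots> = sw (D x) (\<lambda>a b. sw (D a) (\<lambda>a1 a2. sw (D' (S a1)) (\<lambda>p1 q1. sw (D' a2) (\<lambda>p2 q2. R b (\<lambda>c d y. \<Phi> (p1 * p2 * c) (q1 * q2 * d) y)))))"
    by (subst H2.mult) (auto intro!: L parR)
  also have "\<dots> = sw (D x) (\<lambda>a1 b'. sw (D b') (\<lambda>a2 b. sw (D' (S a1)) (\<lambda>p1 q1. sw (D' a2) (\<lambda>p2 q2. R b (\<lambda>c d y. \<Phi> (p1 * p2 * c) (q1 * q2 * d) y)))))"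
    by (subst H1.coassoc) (auto intro!: L parR linR)
  also have "\<dots> = sw (D x) (\<lambda>a1 b'. sw (D' (S a1)) (\<lambda>p1 q1. sw (D b') (\<lambda>a2 b. sw (D' a2) (\<lambda>p2 q2. R b (\<lambda>c d y. \<Phi> (p1 * (p2 * c)) (q1 * (q2 * d)) y)))))"
    by (subst sw_swap) (simp add: mult.assoc)
  finally show ?thesis .
qed

lemma C3:
  assumes P1: "\<And>b c. Lin (\<lambda>a. \<Phi> a b c)" and P2: "\<And>a c. Lin (\<lambda>b. \<Phi> a b c)" and P3: "\<And>a b. Lin (\<lambda>c. \<Phi> a b c)"
  shows "rsw x (\<lambda>h y. sw (D' h) (\<lambda>c d. \<Phi> c d y)) = rsw x (\<lambda>h y. rsw y (\<lambda>h' y'. \<Phi> h h' y'))"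
proof -
  note L = L1 Lin_comp[OF P1] Lin_comp[OF P2] Lin_comp[OF P3]
  have E1: "rsw x (\<lambda>h y. sw (D' h) (\<lambda>c d. \<Phi> c d y)) = sw (D x) (\<lambda>a1 b'. sw (D' (S a1)) (\<lambda>p1 q1. sw (D b') (\<lambda>a2 b. sw (D' a2) (\<lambda>p2 q2.
             rsw b (\<lambda>h y. sw (D' h) (\<lambda>c d. \<Phi> (p1 * (p2 * c)) (q1 * (q2 * d)) y))))))"
    by (rule expand[where R="\<lambda>v \<Psi>. rsw v (\<lambda>h y. sw (D' h) (\<lambda>c d. \<Psi> c d y))", simplified])
       (auto intro!: L)
  have E2: "rsw x (\<lambda>h y. rsw y (\<lambda>h' y'. \<Phi> h h' y')) = sw (D x) (\<lambda>a1 b'. sw (D' (S a1)) (\<lambda>p1 q1. sw (D b') (\<lambda>a2 b. sw (D' a2) (\<lambda>p2 q2.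
             rsw b (\<lambda>h y. rsw y (\<lambda>h' y'. \<Phi> (p1 * (p2 * h)) (q1 * (q2 * h')) y'))))))"
    by (rule expand[where R="\<lambda>v \<Psi>. rsw v (\<lambda>h y. rsw y (\<lambda>h' y'. \<Psi> h h' y'))", simplified])
       (auto intro!: L)
  have S: "sw (D b') (\<lambda>a2 b. sw (D' a2) (\<lambda>p2 q2. rsw b (\<lambda>h y. sw (D' h) (\<lambda>c d. \<Phi> (p1 * (p2 * c)) (q1 * (q2 * d)) y))))
         = sw (D b') (\<lambda>a2 b. sw (D' a2) (\<lambda>p2 q2. rsw b (\<lambda>h y. rsw y (\<lambda>h' y'. \<Phi> (p1 * (p2 * h)) (q1 * (q2 * h')) y'))))"
    for b' p1 q1
    by (rule star[where \<Phi>="\<lambda>c d y. \<Phi> (p1 * c) (q1 * d) y", simplified]) (auto intro!: L)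
  show ?thesis unfolding E1 E2 S ..
qed

lemma rsw_rsw_swap: "rsw x (\<lambda>h y. rsw z (\<lambda>h' y'. K h y h' y')) = rsw z (\<lambda>h' y'. rsw x (\<lambda>h y. K h y h' y'))"
  unfolding rsw_def[of z] by (simp only: rsw_swap)

lemma D1:
  assumes P1: "\<And>b. Lin (\<lambda>a. \<Phi> a b)" and P2: "\<And>a. Lin (\<lambda>b. \<Phi> a b)"
  shows "sw (D' x) (\<lambda>a b. rsw b (\<lambda>h y. \<Phi> (a * T h) y)) = sw (D x) \<Phi>"
proof -
  note L = L1 Lin_comp[OF P1] Lin_comp[OF P2] H2.LinA_S
  have "sw (D' x) (\<lambda>a b. rsw b (\<lambda>h y. \<Phi> (a * T h) y)) = sw (D x) (\<lambda>u v. rsw v (\<lambda>h' w. rsw w (\<lambda>h y. \<Phi> (u * h' * T h) y)))"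
    by (subst C1) (auto intro!: L)
  also have "\<dots> = sw (D x) (\<lambda>u v. rsw v (\<lambda>h y. sw (D' h) (\<lambda>c d. \<Phi> (u * c * T d) y)))"
    by (subst C3) (auto intro!: L)
  also have "\<dots> = sw (D x) (\<lambda>u v. rsw v (\<lambda>h y. sw (D' h) (\<lambda>c d. \<Phi> (u * (c * T d)) y)))"
    by (simp add: mult.assoc)
  also have "\<dots> = sw (D x) (\<lambda>u v. rsw v (\<lambda>h y. e h * \<Phi> (u * 1) y))"
    by (subst H2.antiR) (auto intro!: L)
  also have "\<dots> = sw (D x) (\<lambda>u v. \<Phi> u v)"
    by (subst rsw_counitL) (auto intro!: L)
  finally show ?thesis by simp
qed

definition psw :: "'a \<Rightarrow> ('a \<Rightarrow> 'a \<Rightarrow> 'k) \<Rightarrow> 'k" where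
  "psw x \<Phi> = sw (D' x) (\<lambda>a b. sw (D' b) (\<lambda>c d. rsw (T a) (\<lambda>u v. \<Phi> (u * c) (v * d))))"

lemma psw_phi: "sw (brace_phi D S D' T x) \<Phi> = psw x \<Phi>"
  unfolding brace_phi_def psw_def by (simp add: sw_conv sw3_comult3 rsw_rho)

lemma Lin_psw:
  assumes P1: "\<And>b. Lin (\<lambda>a. \<Phi> a b)" and P2: "\<And>a. Lin (\<lambda>b. \<Phi> a b)" and M: "LinA M"
  shows "Lin (\<lambda>x. psw (M x) \<Phi>)"
  unfolding psw_def using M by (auto intro!: L1 H2.LinA_S Lin_comp[OF P1] Lin_comp[OF P2])

lemma Lin_psw_in: "(\<And>h y. Lin (\<lambda>z. G z h y)) \<Longrightarrow> Lin (\<lambda>z. psw x (G z))"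
  unfolding psw_def by (auto intro!: L1)

lemmas L3 = L1 Lin_psw Lin_psw_in H2.LinA_S

lemma colR:
  assumes P1: "\<And>b. Lin (\<lambda>a. G a b)" and P2: "\<And>a. Lin (\<lambda>b. G a b)"
  shows "sw (D' z) (\<lambda>d a. rsw (d * T a) G) = e z * G 1 1"
  using H2.antiR[OF Lin_rsw[OF P1 P2 LinA_id], of z] rsw_one[OF P1 P2] by simp

lemma colL:
  assumes P1: "\<And>b. Lin (\<lambda>a. G a b)" and P2: "\<And>a. Lin (\<lambda>b. G a b)"
  shows "sw (D' z) (\<lambda>d a. rsw (T d * a) G) = e z * G 1 1"
  using H2.antiL[OF Lin_rsw[OF P1 P2 LinA_id], of z] rsw_one[OF P1 P2] by simp

lemma HM2:
  assumes P1: "\<And>b c. Lin (\<lambda>a. \<Phi> a b c)" and P2: "\<And>a c. Lin (\<lambda>b. \<Phi> a b c)" and P3: "\<And>a b. Lin (\<lambda>c. \<Phi> a b c)"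
  shows "rsw a (\<lambda>p q. sw (D' q) (\<lambda>c d. \<Phi> p c d)) =
    sw (D' a) (\<lambda>a1 a2. rsw a1 (\<lambda>p q. rsw a2 (\<lambda>y1 y0. psw y1 (\<lambda>r s. \<Phi> (p * r) (q * s) y0))))"
proof -
  note L = L3 Lin_comp[OF P1] Lin_comp[OF P2] Lin_comp[OF P3]
  have "sw (D' a) (\<lambda>a1 a2. rsw a1 (\<lambda>p q. rsw a2 (\<lambda>y1 y0. psw y1 (\<lambda>r s. \<Phi> (p * r) (q * s) y0))))
     = sw (D' a) (\<lambda>a1 a2. rsw a1 (\<lambda>p q. rsw a2 (\<lambda>y1 y0. sw (D' y1) (\<lambda>t b. sw (D' b) (\<lambda>c d. rsw (T t) (\<lambda>u v. \<Phi> (p * (u * c)) (q * (v * d)) y0))))))"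
    by (simp only: psw_def)
  also have "\<dots> = sw (D' a) (\<lambda>a1 a2. rsw a1 (\<lambda>p q. rsw a2 (\<lambda>t w. rsw w (\<lambda>b y0. sw (D' b) (\<lambda>c d. rsw (T t) (\<lambda>u v. \<Phi> (p * (u * c)) (q * (v * d)) y0))))))"
    by (subst C3) (auto intro!: L)
  also have "\<dots> = sw (D' a) (\<lambda>a1 a2. rsw a1 (\<lambda>p q. rsw a2 (\<lambda>t w. rsw w (\<lambda>c w'. rsw w' (\<lambda>d y0. rsw (T t) (\<lambda>u v. \<Phi> (p * (u * c)) (q * (v * d)) y0))))))"
    by (subst C3) (auto intro!: L)
  also have "\<dots> = sw (D' a) (\<lambda>a1 a2. rsw a2 (\<lambda>t w. rsw a1 (\<lambda>p q. rsw w (\<lambda>c w'. rsw w' (\<lambda>d y0. rsw (T t) (\<lambda>u v. \<Phi> (p * (u * c)) (q * (v * d)) y0))))))"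
    by (subst rsw_rsw_swap) (rule refl)
  also have "\<dots> = sw (D' a) (\<lambda>a1 a2. rsw a2 (\<lambda>t w. rsw w (\<lambda>c w'. rsw a1 (\<lambda>p q. rsw w' (\<lambda>d y0. rsw (T t) (\<lambda>u v. \<Phi> (p * (u * c)) (q * (v * d)) y0))))))"
    by (subst (2) rsw_rsw_swap) (rule refl)
  also have "\<dots> = sw (D' a) (\<lambda>a1 a2. rsw a2 (\<lambda>t w. rsw w (\<lambda>c w'. rsw w' (\<lambda>d y0. rsw a1 (\<lambda>p q. rsw (T t) (\<lambda>u v. \<Phi> (p * (u * c)) (q * (v * d)) y0))))))"
    by (subst (3) rsw_rsw_swap) (rule refl)
  also have "\<dots> = sw (D' a) (\<lambda>a1 a2. rsw a2 (\<lambda>t w. rsw w (\<lambda>c w'. rsw w' (\<lambda>d y0. rsw (a1 * T t) (\<lambda>m n. \<Phi> (m * c) (n * d) y0)))))"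
    by (subst rsw_mult) (auto intro!: L simp: mult.assoc)
  also have "\<dots> = sw (D a) (\<lambda>m w. rsw w (\<lambda>c w'. rsw w' (\<lambda>d y0. rsw m (\<lambda>m' n. \<Phi> (m' * c) (n * d) y0))))"
    by (subst D1) (auto intro!: L)
  finally have R: "sw (D' a) (\<lambda>a1 a2. rsw a1 (\<lambda>p q. rsw a2 (\<lambda>y1 y0. psw y1 (\<lambda>r s. \<Phi> (p * r) (q * s) y0))))
     = sw (D a) (\<lambda>m w. rsw w (\<lambda>c w'. rsw w' (\<lambda>d y0. rsw m (\<lambda>m' n. \<Phi> (m' * c) (n * d) y0))))" .
  have "rsw a (\<lambda>p q. sw (D' q) (\<lambda>c d. \<Phi> p c d)) = rsw a (\<lambda>p q. sw (D q) (\<lambda>c1 c2. rsw c2 (\<lambda>h y. \<Phi> p (c1 * h) y)))"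
    by (subst C1) (auto intro!: L)
  also have "\<dots> = sw (D a) (\<lambda>u v. rsw u (\<lambda>h1 a1. rsw v (\<lambda>h2 a2. rsw a2 (\<lambda>h y. \<Phi> (h1 * h2) (a1 * h) y))))"
    by (subst C2) (auto intro!: L)
  also have "\<dots> = sw (D a) (\<lambda>u v. rsw v (\<lambda>h2 a2. rsw u (\<lambda>h1 a1. rsw a2 (\<lambda>h y. \<Phi> (h1 * h2) (a1 * h) y))))"
    by (subst rsw_rsw_swap) (rule refl)
  also have "\<dots> = sw (D a) (\<lambda>u v. rsw v (\<lambda>h2 a2. rsw a2 (\<lambda>h y. rsw u (\<lambda>h1 a1. \<Phi> (h1 * h2) (a1 * h) y))))"
    by (subst (2) rsw_rsw_swap) (rule refl)
  finally show ?thesis using R by simp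
qed

lemma HM2':
  assumes P1: "\<And>b c. Lin (\<lambda>a. \<Psi> a b c)" and P2: "\<And>a c. Lin (\<lambda>b. \<Psi> a b c)" and P3: "\<And>a b. Lin (\<lambda>c. \<Psi> a b c)"
  shows "rsw z (\<lambda>y1 y0. psw y1 (\<lambda>r s. \<Psi> r s y0)) =
    sw (D' z) (\<lambda>a0 z'. rsw (T a0) (\<lambda>p q. rsw z' (\<lambda>p' q'. sw (D' q') (\<lambda>c d. \<Psi> (p * p') (q * c) d))))"
proof -
  note L = L3 Lin_comp[OF P1] Lin_comp[OF P2] Lin_comp[OF P3]
  have "sw (D' z) (\<lambda>a0 z'. rsw (T a0) (\<lambda>p q. rsw z' (\<lambda>p' q'. sw (D' q') (\<lambda>c d. \<Psi> (p * p') (q * c) d))))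
    = sw (D' z) (\<lambda>a0 z'. rsw (T a0) (\<lambda>p q. sw (D' z') (\<lambda>a1 a2. rsw a1 (\<lambda>p1 q1. rsw a2 (\<lambda>y1 y0. psw y1 (\<lambda>r s. \<Psi> (p * (p1 * r)) (q * (q1 * s)) y0))))))"
    by (subst HM2) (auto intro!: L)
  also have "\<dots> = sw (D' z) (\<lambda>a0 z'. sw (D' z') (\<lambda>a1 a2. rsw (T a0) (\<lambda>p q. rsw a1 (\<lambda>p1 q1. rsw a2 (\<lambda>y1 y0. psw y1 (\<lambda>r s. \<Psi> (p * (p1 * r)) (q * (q1 * s)) y0))))))"
    by (subst rsw_swap) (rule refl)
  also have "\<dots> = sw (D' z) (\<lambda>m a2. sw (D' m) (\<lambda>a0 a1. rsw (T a0) (\<lambda>p q. rsw a1 (\<lambda>p1 q1. rsw a2 (\<lambda>y1 y0. psw y1 (\<lambda>r s. \<Psi> (p * (p1 * r)) (q * (q1 * s)) y0))))))"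
    by (subst H2.coassoc) (auto intro!: L)
  also have "\<dots> = sw (D' z) (\<lambda>m a2. sw (D' m) (\<lambda>a0 a1. rsw (T a0 * a1) (\<lambda>m' n'. rsw a2 (\<lambda>y1 y0. psw y1 (\<lambda>r s. \<Psi> (m' * r) (n' * s) y0)))))"
    by (subst rsw_mult) (auto intro!: L simp: mult.assoc)
  also have "\<dots> = sw (D' z) (\<lambda>m a2. e m * rsw a2 (\<lambda>y1 y0. psw y1 (\<lambda>r s. \<Psi> r s y0)))"
    by (subst colL) (auto intro!: L)
  also have "\<dots> = rsw z (\<lambda>y1 y0. psw y1 (\<lambda>r s. \<Psi> r s y0))"
    by (subst H2.counitL) (auto intro!: L)
  finally show ?thesis ..
qed

lemma psw_one:
  assumes P1: "\<And>b. Lin (\<lambda>a. \<Phi> a b)" and P2: "\<And>a. Lin (\<lambda>b. \<Phi> a b)"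
  shows "psw 1 \<Phi> = \<Phi> 1 1"
proof -
  note L = L3 Lin_comp[OF P1] Lin_comp[OF P2]
  have "psw 1 \<Phi> = sw (D' 1) (\<lambda>c d. rsw (T 1) (\<lambda>u v. \<Phi> (u * c) (v * d)))"
    unfolding psw_def by (rule H2.unit) (auto intro!: L)
  also have "\<dots> = rsw (T 1) (\<lambda>u v. \<Phi> (u * 1) (v * 1))"
    by (rule H2.unit) (auto intro!: L)
  also have "\<dots> = \<Phi> 1 1" by (simp add: H2.S_one rsw_one P1 P2)
  finally show ?thesis .
qed

lemma psw_mult:
  assumes P1: "\<And>b. Lin (\<lambda>a. \<Phi> a b)" and P2: "\<And>a. Lin (\<lambda>b. \<Phi> a b)"
  shows "psw (x * y) \<Phi> = psw x (\<lambda>u v. psw y (\<lambda>u' v'. \<Phi> (u * u') (v * v')))"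
proof -
  note L = L3 Lin_comp[OF P1] Lin_comp[OF P2]
  have "psw (x * y) \<Phi> = sw (D' x) (\<lambda>a1 b1. sw (D' y) (\<lambda>a2 b2. sw (D' (b1 * b2)) (\<lambda>c d. rsw (T (a1 * a2)) (\<lambda>u v. \<Phi> (u * c) (v * d)))))"
    unfolding psw_def by (subst H2.mult) (auto intro!: L)
  also have "\<dots> = sw (D' x) (\<lambda>a1 b1. sw (D' y) (\<lambda>a2 b2. sw (D' b1) (\<lambda>c1 d1. sw (D' b2) (\<lambda>c2 d2. rsw (T (a1 * a2)) (\<lambda>u v. \<Phi> (u * (c1 * c2)) (v * (d1 * d2)))))))"
    by (subst H2.mult) (auto intro!: L)
  also have "\<dots> = sw (D' x) (\<lambda>a1 b1. sw (D' y) (\<lambda>a2 b2. sw (D' b1) (\<lambda>c1 d1. sw (D' b2) (\<lambda>c2 d2. rsw (T a1) (\<lambda>u1 v1. rsw (T a2) (\<lambda>u2 v2. \<Phi> (u1 * u2 * (c1 * c2)) (v1 * v2 * (d1 * d2))))))))"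
    by (subst H2.S_mult) (subst rsw_mult, auto intro!: L)
  also have "\<dots> = sw (D' x) (\<lambda>a1 b1. sw (D' b1) (\<lambda>c1 d1. sw (D' y) (\<lambda>a2 b2. sw (D' b2) (\<lambda>c2 d2. rsw (T a1) (\<lambda>u1 v1. rsw (T a2) (\<lambda>u2 v2. \<Phi> (u1 * u2 * (c1 * c2)) (v1 * v2 * (d1 * d2))))))))"
    by (subst sw_swap) (rule refl)
  also have "\<dots> = sw (D' x) (\<lambda>a1 b1. sw (D' b1) (\<lambda>c1 d1. sw (D' y) (\<lambda>a2 b2. rsw (T a1) (\<lambda>u1 v1. sw (D' b2) (\<lambda>c2 d2. rsw (T a2) (\<lambda>u2 v2. \<Phi> (u1 * u2 * (c1 * c2)) (v1 * v2 * (d1 * d2))))))))"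
    by (subst rsw_swap) (rule refl)
  also have "\<dots> = sw (D' x) (\<lambda>a1 b1. sw (D' b1) (\<lambda>c1 d1. rsw (T a1) (\<lambda>u1 v1. sw (D' y) (\<lambda>a2 b2. sw (D' b2) (\<lambda>c2 d2. rsw (T a2) (\<lambda>u2 v2. \<Phi> (u1 * u2 * (c1 * c2)) (v1 * v2 * (d1 * d2))))))))"
    by (subst rsw_swap) (rule refl)
  also have "\<dots> = psw x (\<lambda>u v. psw y (\<lambda>u' v'. \<Phi> (u * u') (v * v')))"
    unfolding psw_def by (simp add: ac_simps)
  finally show ?thesis .
qed

lemma psw_counit: "Lin f \<Longrightarrow> psw h (\<lambda>u v. e v * f u) = f h"
proof -
  assume f: "Lin f"
  note L = L3 Lin_comp[OF f]
  have "psw h (\<lambda>u v. e v * f u) = sw (D' h) (\<lambda>a b. sw (D' b) (\<lambda>c d. rsw (T a) (\<lambda>u v. f (u * c) * e v * e d)))"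
    unfolding psw_def by (simp add: H1.e_mult ac_simps)
  also have "\<dots> = sw (D' h) (\<lambda>a b. sw (D' b) (\<lambda>c d. rsw (T a) (\<lambda>u v. f (u * c) * e v) * e d))"
    by (simp only: rsw_cmult_r)
  also have "\<dots> = sw (D' h) (\<lambda>a b. sw (D' b) (\<lambda>c d. e (T a) * f (1 * c) * e d))"
    by (subst rsw_counitR) (auto intro!: L)
  also have "\<dots> = sw (D' h) (\<lambda>a b. e a * sw (D' b) (\<lambda>c d. f c * e d))"
    by (simp add: H2.e_S sw_cmult_l mult.assoc)
  also have "\<dots> = f h"
    by (simp add: H2.counitR H2.counitL f)
  finally show ?thesis .
qed

lemma psw_HM1: "Lin f \<Longrightarrow> psw h (\<lambda>u v. e u * f v) = e h * f 1"
proof -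
  assume f: "Lin f"
  note L = L3 Lin_comp[OF f]
  have "psw h (\<lambda>u v. e u * f v) = sw (D' h) (\<lambda>a b. sw (D' b) (\<lambda>c d. rsw (T a) (\<lambda>u v. e c * (e u * f (v * d)))))"
    unfolding psw_def by (simp add: H1.e_mult ac_simps)
  also have "\<dots> = sw (D' h) (\<lambda>a b. sw (D' b) (\<lambda>c d. e c * rsw (T a) (\<lambda>u v. e u * f (v * d))))"
    by (simp only: rsw_cmult_l)
  also have "\<dots> = sw (D' h) (\<lambda>a b. sw (D' b) (\<lambda>c d. e c * f (T a * d)))"
    by (subst rsw_counitL) (auto intro!: L)
  also have "\<dots> = sw (D' h) (\<lambda>a b. f (T a * b))"
    by (subst H2.counitL) (auto intro!: L)
  also have "\<dots> = e h * f 1"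
    by (subst H2.antiL) (auto intro!: L)
  finally show ?thesis .
qed

lemma phi_coassoc:
  assumes P1: "\<And>b c. Lin (\<lambda>a. \<Phi> a b c)" and P2: "\<And>a c. Lin (\<lambda>b. \<Phi> a b c)" and P3: "\<And>a b. Lin (\<lambda>c. \<Phi> a b c)"
  shows "psw x (\<lambda>u v. psw u (\<lambda>c d. \<Phi> c d v)) = psw x (\<lambda>u v. sw (D' v) (\<lambda>c d. \<Phi> u c d))"
proof -
  note L = L3 Lin_comp[OF P1] Lin_comp[OF P2] Lin_comp[OF P3]
  have "psw x (\<lambda>u v. psw u (\<lambda>c d. \<Phi> c d v)) = sw (D' x) (\<lambda>a b. sw (D' b) (\<lambda>c d. rsw (T a) (\<lambda>u v. psw (u * c) (\<lambda>c' d'. \<Phi> c' d' (v * d)))))"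
    by (simp only: psw_def[of x])
  also have "\<dots> = sw (D' x) (\<lambda>a b. sw (D' b) (\<lambda>c d. rsw (T a) (\<lambda>u v. psw u (\<lambda>u1 v1. psw c (\<lambda>u2 v2. \<Phi> (u1 * u2) (v1 * v2) (v * d))))))"
    by (subst psw_mult) (auto intro!: L)
  also have "\<dots> = sw (D' x) (\<lambda>a b. sw (D' b) (\<lambda>c d. sw (D' (T a)) (\<lambda>a0 z'. rsw (T a0) (\<lambda>p q. rsw z' (\<lambda>p' q'. sw (D' q') (\<lambda>c1 d1. psw c (\<lambda>u2 v2. \<Phi> (p * p' * u2) (q * c1 * v2) (d1 * d))))))))"
    by (subst HM2') (auto intro!: L)
  also have "\<dots> = sw (D' x) (\<lambda>a b. sw (D' b) (\<lambda>c d. sw (D' a) (\<lambda>a1 a2. rsw (T (T a2)) (\<lambda>p q. rsw (T a1) (\<lambda>p' q'. sw (D' q') (\<lambda>c1 d1. psw c (\<lambda>u2 v2. \<Phi> (p * p' * u2) (q * c1 * v2) (d1 * d))))))))"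
    by (subst H2.DS) (auto intro!: L)
  also have "\<dots> = sw (D' x) (\<lambda>a b. sw (D' a) (\<lambda>a1 a2. sw (D' b) (\<lambda>c d. rsw a2 (\<lambda>p q. rsw (T a1) (\<lambda>p' q'. sw (D' q') (\<lambda>c1 d1. psw c (\<lambda>u2 v2. \<Phi> (p * p' * u2) (q * c1 * v2) (d1 * d))))))))"
    by (simp only: H2.S_S) (subst sw_swap, rule refl)
  also have "\<dots> = sw (D' x) (\<lambda>a1 b'. sw (D' b') (\<lambda>a2 b. sw (D' b) (\<lambda>c d. rsw a2 (\<lambda>p q. rsw (T a1) (\<lambda>p' q'. sw (D' q') (\<lambda>c1 d1. psw c (\<lambda>u2 v2. \<Phi> (p * p' * u2) (q * c1 * v2) (d1 * d))))))))"
    by (subst H2.coassoc) (auto intro!: L)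
  also have "\<dots> = sw (D' x) (\<lambda>a1 b'. sw (D' b') (\<lambda>a2 b. sw (D' b) (\<lambda>c d. rsw a2 (\<lambda>p q. rsw (T a1) (\<lambda>p' q'. sw (D' q') (\<lambda>c1 d1.
      sw (D' c) (\<lambda>a3 b3. sw (D' b3) (\<lambda>c3 d3. rsw (T a3) (\<lambda>u3 v3. \<Phi> (p * p' * (u3 * c3)) (q * c1 * (v3 * d3)) (d1 * d))))))))))"
    by (simp only: psw_def)
  also have "\<dots> = sw (D' x) (\<lambda>a1 b'. sw (D' b') (\<lambda>a2 b. sw (D' b) (\<lambda>c d. sw (D' c) (\<lambda>a3 b3. rsw a2 (\<lambda>p q. rsw (T a1) (\<lambda>p' q'. sw (D' q') (\<lambda>c1 d1.
      sw (D' b3) (\<lambda>c3 d3. rsw (T a3) (\<lambda>u3 v3. \<Phi> (p * p' * (u3 * c3)) (q * c1 * (v3 * d3)) (d1 * d))))))))))"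
    by (subst sw_swap, subst rsw_swap, subst rsw_swap, rule refl)
  also have "\<dots> = sw (D' x) (\<lambda>a1 b'. sw (D' b') (\<lambda>a2 b. sw (D' b) (\<lambda>a3 r. sw (D' r) (\<lambda>b3 d. rsw a2 (\<lambda>p q. rsw (T a1) (\<lambda>p' q'. sw (D' q') (\<lambda>c1 d1.
      sw (D' b3) (\<lambda>c3 d3. rsw (T a3) (\<lambda>u3 v3. \<Phi> (p * p' * (u3 * c3)) (q * c1 * (v3 * d3)) (d1 * d))))))))))"
    by (subst H2.coassoc) (auto intro!: L)
  also have "\<dots> = sw (D' x) (\<lambda>a1 b'. sw (D' b') (\<lambda>m r. sw (D' m) (\<lambda>a2 a3. sw (D' r) (\<lambda>b3 d. rsw a2 (\<lambda>p q. rsw (T a1) (\<lambda>p' q'. sw (D' q') (\<lambda>c1 d1.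
      sw (D' b3) (\<lambda>c3 d3. rsw (T a3) (\<lambda>u3 v3. \<Phi> (p * p' * (u3 * c3)) (q * c1 * (v3 * d3)) (d1 * d))))))))))"
    by (subst H2.coassoc) (auto intro!: L)
  also have "\<dots> = sw (D' x) (\<lambda>a1 b'. sw (D' b') (\<lambda>m r. sw (D' r) (\<lambda>b3 d. sw (D' m) (\<lambda>a2 a3. rsw a2 (\<lambda>p q. rsw (T a1) (\<lambda>p' q'. sw (D' q') (\<lambda>c1 d1.
      sw (D' b3) (\<lambda>c3 d3. rsw (T a3) (\<lambda>u3 v3. \<Phi> (p * p' * (u3 * c3)) (q * c1 * (v3 * d3)) (d1 * d))))))))))"
    by (subst sw_swap) (rule refl)
  also have "\<dots> = sw (D' x) (\<lambda>a1 b'. sw (D' b') (\<lambda>m r. sw (D' r) (\<lambda>b3 d. sw (D' m) (\<lambda>a2 a3. rsw a2 (\<lambda>p q. rsw (T a3) (\<lambda>u3 v3. rsw (T a1) (\<lambda>p' q'. sw (D' q') (\<lambda>c1 d1.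
      sw (D' b3) (\<lambda>c3 d3. \<Phi> (p * p' * (u3 * c3)) (q * c1 * (v3 * d3)) (d1 * d))))))))))"
    by (subst rsw_swap[symmetric], subst rsw_swap[symmetric], subst (2) rsw_rsw_swap, rule refl)
  also have "\<dots> = sw (D' x) (\<lambda>a1 b'. sw (D' b') (\<lambda>m r. sw (D' r) (\<lambda>b3 d. sw (D' m) (\<lambda>a2 a3. rsw (a2 * T a3) (\<lambda>m1 n1. rsw (T a1) (\<lambda>p' q'. sw (D' q') (\<lambda>c1 d1.
      sw (D' b3) (\<lambda>c3 d3. \<Phi> (m1 * p' * c3) (n1 * c1 * d3) (d1 * d)))))))))"
    by (subst rsw_mult) (auto intro!: L simp: ac_simps)
  also have "\<dots> = sw (D' x) (\<lambda>a1 b'. sw (D' b') (\<lambda>m r. sw (D' r) (\<lambda>b3 d. e m * rsw (T a1) (\<lambda>p' q'. sw (D' q') (\<lambda>c1 d1.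
      sw (D' b3) (\<lambda>c3 d3. \<Phi> (p' * c3) (c1 * d3) (d1 * d)))))))"
    by (subst colR) (auto intro!: L)
  also have "\<dots> = sw (D' x) (\<lambda>a1 b'. sw (D' b') (\<lambda>m r. e m * sw (D' r) (\<lambda>b3 d. rsw (T a1) (\<lambda>p' q'. sw (D' q') (\<lambda>c1 d1.
      sw (D' b3) (\<lambda>c3 d3. \<Phi> (p' * c3) (c1 * d3) (d1 * d)))))))"
    by (simp only: sw_cmult_l)
  also have "\<dots> = sw (D' x) (\<lambda>a1 b'. sw (D' b') (\<lambda>b3 d. rsw (T a1) (\<lambda>p' q'. sw (D' q') (\<lambda>c1 d1.
      sw (D' b3) (\<lambda>c3 d3. \<Phi> (p' * c3) (c1 * d3) (d1 * d))))))"
    by (subst H2.counitL) (auto intro!: L)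
  also have "\<dots> = sw (D' x) (\<lambda>a1 b'. sw (D' b') (\<lambda>b3 d. sw (D' b3) (\<lambda>c3 d3. rsw (T a1) (\<lambda>p' q'. sw (D' q') (\<lambda>c1 d1.
      \<Phi> (p' * c3) (c1 * d3) (d1 * d))))))"
    by (subst sw_swap, subst rsw_swap, rule refl)
  also have "\<dots> = sw (D' x) (\<lambda>a1 b'. sw (D' b') (\<lambda>c3 r'. sw (D' r') (\<lambda>d3 d. rsw (T a1) (\<lambda>p' q'. sw (D' q') (\<lambda>c1 d1.
      \<Phi> (p' * c3) (c1 * d3) (d1 * d))))))"
    by (subst H2.coassoc) (auto intro!: L)
  finally have LHS: "psw x (\<lambda>u v. psw u (\<lambda>c d. \<Phi> c d v)) = sw (D' x) (\<lambda>a1 b'. sw (D' b') (\<lambda>c3 r'. sw (D' r') (\<lambda>d3 d. rsw (T a1) (\<lambda>p' q'. sw (D' q') (\<lambda>c1 d1.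
      \<Phi> (p' * c3) (c1 * d3) (d1 * d))))))" .
  have "psw x (\<lambda>u v. sw (D' v) (\<lambda>c d. \<Phi> u c d)) = sw (D' x) (\<lambda>a b. sw (D' b) (\<lambda>c d. rsw (T a) (\<lambda>u v. sw (D' (v * d)) (\<lambda>c' d'. \<Phi> (u * c) c' d'))))"
    by (simp only: psw_def)
  also have "\<dots> = sw (D' x) (\<lambda>a b. sw (D' b) (\<lambda>c d. rsw (T a) (\<lambda>u v. sw (D' v) (\<lambda>c1 d1. sw (D' d) (\<lambda>c2 d2. \<Phi> (u * c) (c1 * c2) (d1 * d2))))))"
    by (subst H2.mult) (auto intro!: L)
  also have "\<dots> = sw (D' x) (\<lambda>a b. sw (D' b) (\<lambda>c d. sw (D' d) (\<lambda>c2 d2. rsw (T a) (\<lambda>u v. sw (D' v) (\<lambda>c1 d1. \<Phi> (u * c) (c1 * c2) (d1 * d2))))))"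
    by (subst sw_swap, subst rsw_swap, rule refl)
  finally show ?thesis using LHS by simp
qed

lemma perm1:
  "rsw A (\<lambda>u v. rsw v (\<lambda>p1 q1. rsw d (\<lambda>p2 q2. rsw B (\<lambda>u2 v2. Z u v p1 q1 p2 q2 u2 v2))))
   = rsw d (\<lambda>p2 q2. rsw B (\<lambda>u2 v2. rsw A (\<lambda>u v. rsw v (\<lambda>p1 q1. Z u v p1 q1 p2 q2 u2 v2))))"
  by (subst (1) rsw_rsw_swap, subst (1) rsw_rsw_swap, subst (2) rsw_rsw_swap, subst (2) rsw_rsw_swap, rule refl)

lemma HM3:
  assumes P1: "\<And>b c. Lin (\<lambda>a. \<Phi> a b c)" and P2: "\<And>a c. Lin (\<lambda>b. \<Phi> a b c)" and P3: "\<And>a b. Lin (\<lambda>c. \<Phi> a b c)"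
  shows "psw h (\<lambda>u v. sw (D' u) (\<lambda>c d. \<Phi> c d v)) =
    sw (D' h) (\<lambda>h1 h2. psw h1 (\<lambda>u v. rsw v (\<lambda>p q. psw h2 (\<lambda>r s. \<Phi> u (p * r) (q * s)))))"
proof -
  note L = L3 Lin_comp[OF P1] Lin_comp[OF P2] Lin_comp[OF P3]
  have "psw h (\<lambda>u v. sw (D' u) (\<lambda>c d. \<Phi> c d v)) = sw (D' h) (\<lambda>a b. sw (D' b) (\<lambda>c d. rsw (T a) (\<lambda>u v. sw (D' (u * c)) (\<lambda>c' d'. \<Phi> c' d' (v * d)))))"
    by (simp only: psw_def)
  also have "\<dots> = sw (D' h) (\<lambda>a b. sw (D' b) (\<lambda>c d. rsw (T a) (\<lambda>u v. sw (D' u) (\<lambda>c1 d1. sw (D' c) (\<lambda>c2 d2. \<Phi> (c1 * c2) (d1 * d2) (v * d))))))"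
    by (subst H2.mult) (auto intro!: L)
  also have "\<dots> = sw (D' h) (\<lambda>a b. sw (D' b) (\<lambda>c d. rsw (T a) (\<lambda>u v. rsw v (\<lambda>u' v'. sw (D' c) (\<lambda>c2 d2. \<Phi> (u * c2) (u' * d2) (v' * d))))))"
    by (subst C3) (auto intro!: L)
  also have "\<dots> = sw (D' h) (\<lambda>a b. sw (D' b) (\<lambda>c d. sw (D' c) (\<lambda>c2 d2. rsw (T a) (\<lambda>u v. rsw v (\<lambda>u' v'. \<Phi> (u * c2) (u' * d2) (v' * d))))))"
    by (subst rsw_swap, subst rsw_swap, rule refl)
  also have "\<dots> = sw (D' h) (\<lambda>a b. sw (D' b) (\<lambda>c2 b'. sw (D' b') (\<lambda>d2 d. rsw (T a) (\<lambda>u v. rsw v (\<lambda>u' v'. \<Phi> (u * c2) (u' * d2) (v' * d))))))"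
    by (subst H2.coassoc) (auto intro!: L)
  finally have LHS: "psw h (\<lambda>u v. sw (D' u) (\<lambda>c d. \<Phi> c d v)) =
     sw (D' h) (\<lambda>a b. sw (D' b) (\<lambda>c2 b'. sw (D' b') (\<lambda>d2 d. rsw (T a) (\<lambda>u v. rsw v (\<lambda>u' v'. \<Phi> (u * c2) (u' * d2) (v' * d))))))" .
  have "sw (D' h) (\<lambda>h1 h2. psw h1 (\<lambda>u v. rsw v (\<lambda>p q. psw h2 (\<lambda>r s. \<Phi> u (p * r) (q * s)))))
    = sw (D' h) (\<lambda>h1 h2. sw (D' h1) (\<lambda>a b. sw (D' b) (\<lambda>c d. rsw (T a) (\<lambda>u v. rsw (v * d) (\<lambda>p q. sw (D' h2) (\<lambda>a' b''. sw (D' b'') (\<lambda>c' d'.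
        rsw (T a') (\<lambda>u2 v2. \<Phi> (u * c) (p * (u2 * c')) (q * (v2 * d'))))))))))"
    by (simp only: psw_def)
  also have "\<dots> = sw (D' h) (\<lambda>h1 h2. sw (D' h1) (\<lambda>a b. sw (D' b) (\<lambda>c d. rsw (T a) (\<lambda>u v. rsw v (\<lambda>p1 q1. rsw d (\<lambda>p2 q2. sw (D' h2) (\<lambda>a' b''. sw (D' b'') (\<lambda>c' d'.
        rsw (T a') (\<lambda>u2 v2. \<Phi> (u * c) (p1 * p2 * (u2 * c')) (q1 * q2 * (v2 * d')))))))))))"
    by (subst rsw_mult) (auto intro!: L)
  also have "\<dots> = sw (D' h) (\<lambda>a t. sw (D' t) (\<lambda>b h2. sw (D' b) (\<lambda>c d. rsw (T a) (\<lambda>u v. rsw v (\<lambda>p1 q1. rsw d (\<lambda>p2 q2. sw (D' h2) (\<lambda>a' b''. sw (D' b'') (\<lambda>c' d'.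
        rsw (T a') (\<lambda>u2 v2. \<Phi> (u * c) (p1 * p2 * (u2 * c')) (q1 * q2 * (v2 * d')))))))))))"
    by (subst H2.coassoc) (auto intro!: L)
  also have "\<dots> = sw (D' h) (\<lambda>a t. sw (D' t) (\<lambda>c t2. sw (D' t2) (\<lambda>d h2. rsw (T a) (\<lambda>u v. rsw v (\<lambda>p1 q1. rsw d (\<lambda>p2 q2. sw (D' h2) (\<lambda>a' b''. sw (D' b'') (\<lambda>c' d'.
        rsw (T a') (\<lambda>u2 v2. \<Phi> (u * c) (p1 * p2 * (u2 * c')) (q1 * q2 * (v2 * d')))))))))))"
    by (subst H2.coassoc) (auto intro!: L)
  also have "\<dots> = sw (D' h) (\<lambda>a t. sw (D' t) (\<lambda>c t2. sw (D' t2) (\<lambda>d h2. sw (D' h2) (\<lambda>a' b''. rsw (T a) (\<lambda>u v. rsw v (\<lambda>p1 q1. rsw d (\<lambda>p2 q2. sw (D' b'') (\<lambda>c' d'.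
        rsw (T a') (\<lambda>u2 v2. \<Phi> (u * c) (p1 * p2 * (u2 * c')) (q1 * q2 * (v2 * d')))))))))))"
    by (subst rsw_swap, subst rsw_swap, subst rsw_swap, rule refl)
  also have "\<dots> = sw (D' h) (\<lambda>a t. sw (D' t) (\<lambda>c t2. sw (D' t2) (\<lambda>m b''. sw (D' m) (\<lambda>d a'. rsw (T a) (\<lambda>u v. rsw v (\<lambda>p1 q1. rsw d (\<lambda>p2 q2. sw (D' b'') (\<lambda>c' d'.
        rsw (T a') (\<lambda>u2 v2. \<Phi> (u * c) (p1 * p2 * (u2 * c')) (q1 * q2 * (v2 * d')))))))))))"
    by (subst H2.coassoc) (auto intro!: L)
  also have "\<dots> = sw (D' h) (\<lambda>a t. sw (D' t) (\<lambda>c t2. sw (D' t2) (\<lambda>m b''. sw (D' m) (\<lambda>d a'. rsw (T a) (\<lambda>u v. rsw v (\<lambda>p1 q1. rsw d (\<lambda>p2 q2.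
        rsw (T a') (\<lambda>u2 v2. sw (D' b'') (\<lambda>c' d'. \<Phi> (u * c) (p1 * p2 * (u2 * c')) (q1 * q2 * (v2 * d')))))))))))"
    by (subst rsw_swap[symmetric], rule refl)
  also have "\<dots> = sw (D' h) (\<lambda>a t. sw (D' t) (\<lambda>c t2. sw (D' t2) (\<lambda>m b''. sw (D' m) (\<lambda>d a'. rsw d (\<lambda>p2 q2. rsw (T a') (\<lambda>u2 v2. rsw (T a) (\<lambda>u v. rsw v (\<lambda>p1 q1.
        sw (D' b'') (\<lambda>c' d'. \<Phi> (u * c) (p1 * p2 * (u2 * c')) (q1 * q2 * (v2 * d')))))))))))"
    by (simp only: perm1)
  also have "\<dots> = sw (D' h) (\<lambda>a t. sw (D' t) (\<lambda>c t2. sw (D' t2) (\<lambda>m b''. sw (D' m) (\<lambda>d a'. rsw (d * T a') (\<lambda>m1 n1. rsw (T a) (\<lambda>u v. rsw v (\<lambda>p1 q1.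
        sw (D' b'') (\<lambda>c' d'. \<Phi> (u * c) (p1 * m1 * c') (q1 * n1 * d')))))))))"
    by (subst rsw_mult) (auto intro!: L simp: ac_simps)
  also have "\<dots> = sw (D' h) (\<lambda>a t. sw (D' t) (\<lambda>c t2. sw (D' t2) (\<lambda>m b''. e m * rsw (T a) (\<lambda>u v. rsw v (\<lambda>p1 q1.
        sw (D' b'') (\<lambda>c' d'. \<Phi> (u * c) (p1 * c') (q1 * d')))))))"
    by (subst colR) (auto intro!: L)
  also have "\<dots> = sw (D' h) (\<lambda>a t. sw (D' t) (\<lambda>c t2. rsw (T a) (\<lambda>u v. rsw v (\<lambda>p1 q1.
        sw (D' t2) (\<lambda>c' d'. \<Phi> (u * c) (p1 * c') (q1 * d'))))))"
    by (subst H2.counitL) (auto intro!: L)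
  also have "\<dots> = sw (D' h) (\<lambda>a t. sw (D' t) (\<lambda>c t2. sw (D' t2) (\<lambda>c' d'. rsw (T a) (\<lambda>u v. rsw v (\<lambda>p1 q1.
        \<Phi> (u * c) (p1 * c') (q1 * d'))))))"
    by (subst rsw_swap, subst rsw_swap, rule refl)
  finally show ?thesis using LHS by simp
qed

lemma teq2_refl: "teq2 sc xs xs" unfolding teq2_def by simp

lemma lin2I:
  assumes "\<And>f g. Lin f \<Longrightarrow> Lin g \<Longrightarrow> Lin (\<lambda>x. sw (R x) (\<lambda>a b. f a * g b))"
  shows "lin2 sc R"
  unfolding lin2_def
proof (intro conjI allI)
  fix x y show "teq2 sc (R (x + y)) (R x @ R y)"
  proof (rule teq2I)
    fix f g assume "Lin f" "Lin g"
    from assms[OF this] show "sw (R (x + y)) (\<lambda>a b. f a * g b) = sw (R x @ R y) (\<lambda>a b. f a * g b)"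
      by (simp add: Lin_def sw_append)
  qed
next
  fix c x show "teq2 sc (R (sc c x)) (map (\<lambda>(a, b). (sc c a, b)) (R x))"
  proof (rule teq2I)
    fix f g assume fg: "Lin f" "Lin g"
    have "sw (map (\<lambda>(a, b). (sc c a, b)) (R x)) (\<lambda>a b. f a * g b) = sw (R x) (\<lambda>a b. c * (f a * g b))"
      using sw_map[of "\<lambda>a b. sc c a" "\<lambda>a b. b" "R x"] fg(1) by (simp add: Lin_def mult.assoc)
    with assms[OF fg] show "sw (R (sc c x)) (\<lambda>a b. f a * g b) = sw (map (\<lambda>(a, b). (sc c a, b)) (R x)) (\<lambda>a b. f a * g b)"
      by (simp add: Lin_def sw_cmult_l)
  qed
qed

lemma main: "hopf_matched_pair sc D' e T D' e T (brace_rho D S D') (brace_phi D S D' T)"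
proof -
  let ?rho = "brace_rho D S D'" and ?phi = "brace_phi D S D' T"
  have LC: "left_comodule_algebra sc D' e ?rho"
    unfolding left_comodule_algebra_def
  proof (intro conjI allI)
    show "lin2 sc ?rho"
      by (rule lin2I) (simp only: rsw_rho, auto intro!: L3)
  next
    fix a show "teq3 sc [(c, d, q). (p, q) \<leftarrow> ?rho a, (c, d) \<leftarrow> D' p] [(p, c, d). (p, q) \<leftarrow> ?rho a, (c, d) \<leftarrow> ?rho q]"
    proof (rule teq3I)
      fix f g h :: "'a \<Rightarrow> 'k" assume fgh: "Lin f" "Lin g" "Lin h"
      note L = L3 Lin_comp[OF fgh(1)] Lin_comp[OF fgh(2)] Lin_comp[OF fgh(3)]
      show "sw3 [(c, d, q). (p, q) \<leftarrow> ?rho a, (c, d) \<leftarrow> D' p] (\<lambda>a b c. f a * g b * h c) = sw3 [(p, c, d). (p, q) \<leftarrow> ?rho a, (c, d) \<leftarrow> ?rho q] (\<lambda>a b c. f a * g b * h c)"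
        by (simp only: sw_conv rsw_rho) (rule C3, auto intro!: L)
    qed
  next
    fix a show "sum_list (map (\<lambda>(p, q). sc (e p) q) (?rho a)) = a"
    proof (rule separate)
      fix f :: "'a \<Rightarrow> 'k" assume f: "Lin f"
      show "f (sum_list (map (\<lambda>(p, q). sc (e p) q) (?rho a))) = f a"
        using f by (simp add: Lin_sum_map rsw_rho rsw_counitL Lin_def)
    qed
  next
    fix a b show "teq2 sc (?rho (a * b)) [(p * r, q * s). (p, q) \<leftarrow> ?rho a, (r, s) \<leftarrow> ?rho b]"
    proof (rule teq2I)
      fix f g :: "'a \<Rightarrow> 'k" assume fg: "Lin f" "Lin g"
      note L = L3 Lin_comp[OF fg(1)] Lin_comp[OF fg(2)]
      show "sw (?rho (a * b)) (\<lambda>a b. f a * g b) = sw [(p * r, q * s). (p, q) \<leftarrow> ?rho a, (r, s) \<leftarrow> ?rho b] (\<lambda>a b. f a * g b)"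
        by (simp only: sw_conv rsw_rho) (rule rsw_mult, auto intro!: L)
    qed
  next
    show "teq2 sc (?rho 1) [(1, 1)]"
    proof (rule teq2I)
      fix f g :: "'a \<Rightarrow> 'k" assume fg: "Lin f" "Lin g"
      note L = L3 Lin_comp[OF fg(1)] Lin_comp[OF fg(2)]
      show "sw (?rho 1) (\<lambda>a b. f a * g b) = sw [(1, 1)] (\<lambda>a b. f a * g b)"
        by (simp only: rsw_rho sw_Cons sw_Nil) (subst rsw_one, auto intro!: L)
    qed
  qed
  have RC: "right_comodule_algebra sc D' e ?phi"
    unfolding right_comodule_algebra_def
  proof (intro conjI allI)
    show "lin2 sc ?phi"
      by (rule lin2I) (simp only: psw_phi, auto intro!: L3)
  next
    fix a show "teq3 sc [(c, d, v). (u, v) \<leftarrow> ?phi a, (c, d) \<leftarrow> ?phi u] [(u, c, d). (u, v) \<leftarrow> ?phi a, (c, d) \<leftarrow> D' v]"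
    proof (rule teq3I)
      fix f g h :: "'a \<Rightarrow> 'k" assume fgh: "Lin f" "Lin g" "Lin h"
      note L = L3 Lin_comp[OF fgh(1)] Lin_comp[OF fgh(2)] Lin_comp[OF fgh(3)]
      show "sw3 [(c, d, v). (u, v) \<leftarrow> ?phi a, (c, d) \<leftarrow> ?phi u] (\<lambda>a b c. f a * g b * h c) = sw3 [(u, c, d). (u, v) \<leftarrow> ?phi a, (c, d) \<leftarrow> D' v] (\<lambda>a b c. f a * g b * h c)"
        by (simp only: sw_conv psw_phi) (rule phi_coassoc, auto intro!: L)
    qed
  next
    fix a show "sum_list (map (\<lambda>(u, v). sc (e v) u) (?phi a)) = a"
    proof (rule separate)
      fix f :: "'a \<Rightarrow> 'k" assume f: "Lin f"
      show "f (sum_list (map (\<lambda>(u, v). sc (e v) u) (?phi a))) = f a"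
        using f by (simp add: Lin_sum_map psw_phi psw_counit Lin_def)
    qed
  next
    fix a b show "teq2 sc (?phi (a * b)) [(p * r, q * s). (p, q) \<leftarrow> ?phi a, (r, s) \<leftarrow> ?phi b]"
    proof (rule teq2I)
      fix f g :: "'a \<Rightarrow> 'k" assume fg: "Lin f" "Lin g"
      note L = L3 Lin_comp[OF fg(1)] Lin_comp[OF fg(2)]
      show "sw (?phi (a * b)) (\<lambda>a b. f a * g b) = sw [(p * r, q * s). (p, q) \<leftarrow> ?phi a, (r, s) \<leftarrow> ?phi b] (\<lambda>a b. f a * g b)"
        by (simp only: sw_conv psw_phi) (rule psw_mult, auto intro!: L)
    qed
  next
    show "teq2 sc (?phi 1) [(1, 1)]"
    proof (rule teq2I)
      fix f g :: "'a \<Rightarrow> 'k" assume fg: "Lin f" "Lin g"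
      note L = L3 Lin_comp[OF fg(1)] Lin_comp[OF fg(2)]
      show "sw (?phi 1) (\<lambda>a b. f a * g b) = sw [(1, 1)] (\<lambda>a b. f a * g b)"
        by (simp only: psw_phi sw_Cons sw_Nil) (subst psw_one, auto intro!: L)
    qed
  qed
  show ?thesis
    unfolding hopf_matched_pair_def
  proof (intro conjI allI)
    show "hopf_algebra sc D' e T" by (rule H2.hopf)
    show "hopf_algebra sc D' e T" by (rule H2.hopf)
    show "left_comodule_algebra sc D' e ?rho" by (rule LC)
    show "right_comodule_algebra sc D' e ?phi" by (rule RC)
  next
    fix a show "sum_list (map (\<lambda>(p, q). sc (e q) p) (?rho a)) = sc (e a) 1"
    proof (rule separate)
      fix f :: "'a \<Rightarrow> 'k" assume f: "Lin f"
      show "f (sum_list (map (\<lambda>(p, q). sc (e q) p) (?rho a))) = f (sc (e a) 1)"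
        using f rsw_counitR[OF f, of a] by (simp add: Lin_sum_map rsw_rho Lin_def mult.commute)
    qed
  next
    fix a show "sum_list (map (\<lambda>(u, v). sc (e u) v) (?phi a)) = sc (e a) 1"
    proof (rule separate)
      fix f :: "'a \<Rightarrow> 'k" assume f: "Lin f"
      show "f (sum_list (map (\<lambda>(u, v). sc (e u) v) (?phi a))) = f (sc (e a) 1)"
        using f psw_HM1[OF f, of a] by (simp add: Lin_sum_map psw_phi Lin_def)
    qed
  next
    fix a show "teq3 sc [(p, c, d). (p, q) \<leftarrow> ?rho a, (c, d) \<leftarrow> D' q]
                  [(p * r, q * s, y0). (a1, a2) \<leftarrow> D' a, (p, q) \<leftarrow> ?rho a1,
                                        (y1, y0) \<leftarrow> ?rho a2, (r, s) \<leftarrow> ?phi y1]"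
    proof (rule teq3I)
      fix f g h :: "'a \<Rightarrow> 'k" assume fgh: "Lin f" "Lin g" "Lin h"
      note L = L3 Lin_comp[OF fgh(1)] Lin_comp[OF fgh(2)] Lin_comp[OF fgh(3)]
      show "sw3 [(p, c, d). (p, q) \<leftarrow> ?rho a, (c, d) \<leftarrow> D' q] (\<lambda>a b c. f a * g b * h c) =
            sw3 [(p * r, q * s, y0). (a1, a2) \<leftarrow> D' a, (p, q) \<leftarrow> ?rho a1, (y1, y0) \<leftarrow> ?rho a2, (r, s) \<leftarrow> ?phi y1] (\<lambda>a b c. f a * g b * h c)"
        by (simp only: sw_conv rsw_rho psw_phi) (rule HM2, auto intro!: L)
    qed
  next
    fix a show "teq3 sc [(c, d, v). (u, v) \<leftarrow> ?phi a, (c, d) \<leftarrow> D' u]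
                  [(u, p * r, q * s). (h1, h2) \<leftarrow> D' a, (u, v) \<leftarrow> ?phi h1,
                                       (p, q) \<leftarrow> ?rho v, (r, s) \<leftarrow> ?phi h2]"
    proof (rule teq3I)
      fix f g h :: "'a \<Rightarrow> 'k" assume fgh: "Lin f" "Lin g" "Lin h"
      note L = L3 Lin_comp[OF fgh(1)] Lin_comp[OF fgh(2)] Lin_comp[OF fgh(3)]
      show "sw3 [(c, d, v). (u, v) \<leftarrow> ?phi a, (c, d) \<leftarrow> D' u] (\<lambda>a b c. f a * g b * h c) =
            sw3 [(u, p * r, q * s). (h1, h2) \<leftarrow> D' a, (u, v) \<leftarrow> ?phi h1, (p, q) \<leftarrow> ?rho v, (r, s) \<leftarrow> ?phi h2] (\<lambda>a b c. f a * g b * h c)"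
        by (simp only: sw_conv rsw_rho psw_phi) (rule HM3, auto intro!: L)
    qed
  next
    fix a h show "teq2 sc [(u * p, v * q). (u, v) \<leftarrow> ?phi h, (p, q) \<leftarrow> ?rho a]
                    [(p * u, q * v). (u, v) \<leftarrow> ?phi h, (p, q) \<leftarrow> ?rho a]"
      by (simp add: mult.commute teq2_refl)
  qed
qed

end

lemma final:
  fixes sc :: "'k::field \<Rightarrow> 'a::comm_ring_1 \<Rightarrow> 'a"
    and D D' :: "'a \<Rightarrow> ('a \<times> 'a) list"
    and e e' :: "'a \<Rightarrow> 'k"
    and S T :: "'a \<Rightarrow> 'a"
  assumes "hopf_brace sc D e S D' e' T"
  shows "hopf_matched_pair sc D' e' T D' e' T (brace_rho D S D') (brace_phi D S D' T)"
proof -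
  have H1: "hopf_algebra sc D e S" and H2: "hopf_algebra sc D' e' T"
    and B: "\<forall>h. teq3 sc [(a, c, d). (a, b) \<leftarrow> D' h, (c, d) \<leftarrow> D b]
                  [(p * S y * r, q, s). (x, y, z) \<leftarrow> comult3 D h, (p, q) \<leftarrow> D' x, (r, s) \<leftarrow> D' z]"
    using assms by (simp_all add: hopf_brace_def)
  have K: "k_algebra sc" using H1 by (simp add: hopf_algebra_def)
  interpret hb sc D e S D' e' T
    by unfold_locales (use K H1 H2 B in auto)
  interpret hbe sc D e S D' T by (rule hbe)
  show ?thesis using main ee by simp
qed


theorem proposition3p3:
  fixes sc :: "'k::field \<Rightarrow> 'a::comm_ring_1 \<Rightarrow> 'a"
    and D D' :: "'a \<Rightarrow> ('a \<times> 'a) list"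
    and e e' :: "'a \<Rightarrow> 'k"
    and S T :: "'a \<Rightarrow> 'a"
  assumes "hopf_brace sc D e S D' e' T"
  shows "hopf_matched_pair sc D' e' T D' e' T (brace_rho D S D') (brace_phi D S D' T)"
  using final[OF assms] .

end
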